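(* Let $\|\cdot\|$ be a norm on $\mathbb{C}^n$, differentiable (away from $0$), such that $\|(x_1,\dots,x_n)\|\le\|(x_1,\dots,x_n)\|_{\ell^1_n}$ and $\|(x_1,\dots,x_n)\|=\|(|x_1|,\dots,|x_n|)\|$ for all $x_1,\dots,x_n\in\mathbb{C}$. Then for absolutely continuous functions $f_1,\dots,f_n:\mathbb{T}\to\mathbb{C}$, \[\mathrm{Ber}\,\|(f_1,\dots,f_n)\|\le\|(\mathrm{Ber}f_1,\dots,\mathrm{Ber}f_n)\|_*,\] where $\|v\|_*=\sup_{\|w\|=1}|\langle v,w\rangle|$ is the dual norm.
   Context: $\mathbb{T}=\mathbb{R}/2\pi\mathbb{Z}$ with normalized Lebesgue measure, $\mathbb{E}$ the integral. For an absolutely continuous $f:\mathbb{T}\to\mathbb{C}$, $\mathrm{Ber}f=\mathbb{E}|f'|/\mathbb{E}|f|$. $\|(f_1,\dots,f_n)\|$ denotes the function $t\mapsto\|(f_1(t),\dots,f_n(t))\|$. *)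

theory Defs
  imports "HOL-Analysis.Analysis"
begin

text \<open>The circle T = R/2piZ is modelled by 2pi-periodic functions on the reals;
  the normalized Lebesgue measure gives the expectation below.\<close>

definition periodic2pi :: "(real \<Rightarrow> 'a) \<Rightarrow> bool" where
  "periodic2pi f \<longleftrightarrow> (\<forall>t. f (t + 2 * pi) = f t)"

definition abs_cont_on :: "real \<Rightarrow> real \<Rightarrow> (real \<Rightarrow> 'a::real_normed_vector) \<Rightarrow> bool" where
  "abs_cont_on a b f \<longleftrightarrow>
     (\<forall>\<epsilon>>0. \<exists>\<delta>>0. \<forall>(n::nat) (I::nat \<Rightarrow> real \<times> real).
        (\<forall>k<n. a \<le> fst (I k) \<and> fst (I k) \<le> snd (I k) \<and> snd (I k) \<le> b) \<and>
        (\<forall>j<n. \<forall>k<n. j \<noteq> k \<longrightarrow>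
            {fst (I j)<..<snd (I j)} \<inter> {fst (I k)<..<snd (I k)} = {}) \<and>
        (\<Sum>k<n. snd (I k) - fst (I k)) < \<delta>
        \<longrightarrow> (\<Sum>k<n. norm (f (snd (I k)) - f (fst (I k)))) < \<epsilon>)"

definition abs_cont_T :: "(real \<Rightarrow> 'a::real_normed_vector) \<Rightarrow> bool" where
  "abs_cont_T f \<longleftrightarrow> periodic2pi f \<and> abs_cont_on 0 (2 * pi) f"

definition ET :: "(real \<Rightarrow> real) \<Rightarrow> real" where
  "ET g = integral {0..2 * pi} g / (2 * pi)"

definition Ber :: "(real \<Rightarrow> 'a::real_normed_vector) \<Rightarrow> real" where
  "Ber f = ET (\<lambda>t. norm (vector_derivative f (at t))) / ET (\<lambda>t. norm (f t))"

definition dual_norm :: "(complex ^ 'n \<Rightarrow> real) \<Rightarrow> complex ^ 'n \<Rightarrow> real" where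
  "dual_norm N v = Sup {cmod (\<Sum>i\<in>UNIV. v $ i * cnj (w $ i)) | w. N w = 1}"

end

theory Submission
  imports Defs
begin

lemma negligible_by_outer:
  fixes E :: "real set"
  assumes bnd: "E \<subseteq> T0" "T0 \<in> lmeasurable" and c: "0 \<le> c" "c < 1"
    and H: "\<And>U. open U \<Longrightarrow> E \<subseteq> U \<Longrightarrow> U \<in> lmeasurable \<Longrightarrow>
          \<exists>T. E \<subseteq> T \<and> T \<in> lmeasurable \<and> measure lebesgue T \<le> c * measure lebesgue U"
  shows "negligible E"
proof -
  define M where "M = {measure lebesgue T | T. E \<subseteq> T \<and> T \<in> lmeasurable}"
  have Mne: "M \<noteq> {}" using bnd unfolding M_def by blast
  have Mbdd: "bdd_below M" unfolding M_def by (rule bdd_belowI[of _ 0]) auto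
  define s where "s = Inf M"
  have s0: "0 \<le> s" unfolding s_def using Mne by (rule cInf_greatest) (auto simp: M_def)
  have key: "s \<le> c * (s + 2 * e)" if e: "e > 0" for e
  proof -
    have "Inf M < s + e" using e s_def by simp
    then obtain m where "m \<in> M" "m < s + e" using cInf_lessD[OF Mne] by blast
    then obtain T1 where T1: "E \<subseteq> T1" "T1 \<in> lmeasurable" "measure lebesgue T1 < s + e"
      unfolding M_def by blast
    obtain U where U: "open U" "T1 \<subseteq> U" "(U - T1) \<in> lmeasurable" "emeasure lebesgue (U - T1) < ennreal e"
      using sets_lebesgue_outer_open[of T1 e] T1(2) e by (auto simp: fmeasurable_def)
    have Oeq: "U = T1 \<union> (U - T1)" using U by blast
    have Olm: "U \<in> lmeasurable" using U(3) T1(2) by (subst Oeq) (rule fmeasurable.Un)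
    have m1: "measure lebesgue (U - T1) < e"
      using U(3) U(4) e by (simp add: emeasure_eq_measure2 ennreal_less_iff)
    have "measure lebesgue U \<le> measure lebesgue T1 + measure lebesgue (U - T1)"
      using T1(2) U(3) by (subst Oeq) (rule measure_Un_le, auto)
    then have mO: "measure lebesgue U \<le> s + 2 * e" using m1 T1 by linarith
    obtain T where T: "E \<subseteq> T" "T \<in> lmeasurable" "measure lebesgue T \<le> c * measure lebesgue U"
      using H[OF U(1) _ Olm] T1(1) U(2) by blast
    have "s \<le> measure lebesgue T" unfolding s_def
      using Mbdd T by (intro cInf_lower) (auto simp: M_def)
    also have "\<dots> \<le> c * (s + 2 * e)" using T(3) mO c by (meson mult_left_mono order_trans)
    finally show ?thesis .
  qed
  have "s \<le> 0"
  proof (rule ccontr)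
    assume "\<not> s \<le> 0"
    then have sp: "s > 0" by simp
    define e where "e = s * (1 - c) / (4 * max c 1)"
    have ep: "e > 0" using sp c by (simp add: e_def)
    have "c * (2 * e) \<le> s * (1 - c) / 2"
    proof -
      have "c * (2 * e) = (c / max c 1) * (s * (1 - c) / 2)" by (simp add: e_def field_simps)
      also have "\<dots> \<le> 1 * (s * (1 - c) / 2)"
        using c sp by (intro mult_right_mono) (auto simp: divide_le_eq_1)
      finally show ?thesis by simp
    qed
    moreover have "s \<le> c * s + c * (2 * e)" using key[OF ep] by (simp add: algebra_simps)
    moreover have "0 < s * (1 - c)" using sp c by simp
    moreover have "s * (1 - c) = s - c * s" by (simp add: algebra_simps)
    ultimately show False by linarith
  qed
  with s0 have s: "s = 0" by simp
  show ?thesis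
    unfolding negligible_outer
  proof (intro allI impI)
    fix e :: real assume "e > 0"
    then have "Inf M < e" using s s_def by simp
    then obtain m where "m \<in> M" "m < e" using cInf_lessD[OF Mne] by blast
    then show "\<exists>T. E \<subseteq> T \<and> T \<in> lmeasurable \<and> measure lebesgue T < e"
      unfolding M_def by blast
  qed
qed

lemma cball_family_le:
  fixes M1 M2 :: "real measure"
  assumes s1: "sets M1 = sets borel" and s2: "sets M2 = sets borel"
    and C: "countable C"
    and disj: "pairwise (\<lambda>i j. disjnt (cball (fst i) (snd i)) (cball (fst j) (snd j))) C"
    and le: "\<And>i. i \<in> C \<Longrightarrow> c1 * emeasure M1 (cball (fst i) (snd i)) \<le> c2 * emeasure M2 (cball (fst i) (snd i))"
  shows "c1 * emeasure M1 (\<Union>i\<in>C. cball (fst i) (snd i)) \<le> c2 * emeasure M2 (\<Union>i\<in>C. cball (fst i) (snd i))"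
proof -
  have df: "disjoint_family_on (\<lambda>i. cball (fst i) (snd i)) C"
    using disj by (auto simp: disjoint_family_on_def pairwise_def disjnt_def)
  have m1: "\<And>i. i \<in> C \<Longrightarrow> cball (fst i) (snd i) \<in> sets M1" using s1 by simp
  have m2: "\<And>i. i \<in> C \<Longrightarrow> cball (fst i) (snd i) \<in> sets M2" using s2 by simp
  have "c1 * emeasure M1 (\<Union>i\<in>C. cball (fst i) (snd i)) = c1 * (\<integral>\<^sup>+i. emeasure M1 (cball (fst i) (snd i)) \<partial>count_space C)"
    using emeasure_UN_countable[OF m1 C df] by simp
  also have "\<dots> = (\<integral>\<^sup>+i. c1 * emeasure M1 (cball (fst i) (snd i)) \<partial>count_space C)"
    by (rule nn_integral_cmult[symmetric]) simp
  also have "\<dots> \<le> (\<integral>\<^sup>+i. c2 * emeasure M2 (cball (fst i) (snd i)) \<partial>count_space C)"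
    by (rule nn_integral_mono) (use le in auto)
  also have "\<dots> = c2 * (\<integral>\<^sup>+i. emeasure M2 (cball (fst i) (snd i)) \<partial>count_space C)"
    by (rule nn_integral_cmult) simp
  also have "\<dots> = c2 * emeasure M2 (\<Union>i\<in>C. cball (fst i) (snd i))"
    using emeasure_UN_countable[OF m2 C df] by simp
  finally show ?thesis .
qed

lemma imF_cball:
  fixes F :: "real \<Rightarrow> real"
  assumes mono: "mono F" and cont: "continuous_on UNIV F" and r: "0 \<le> r"
  shows "emeasure (interval_measure F) (cball c r) = ennreal (F (c + r) - F (c - r))"
  using emeasure_interval_measure_Icc[of "c - r" "c + r" F] mono cont r
  by (simp add: cball_eq_atLeastAtMost monoD)

lemma lborel_cball: "0 \<le> r \<Longrightarrow> emeasure lborel (cball (c::real) r) = ennreal (2 * r)"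
  by (simp add: cball_eq_atLeastAtMost)

lemma cball_sub_ball:
  fixes x c :: real
  assumes "x \<in> cball c r" "r < e / 2"
  shows "cball c r \<subseteq> ball x e"
  using assms by (auto simp: dist_real_def)

lemma cball_minus_ball_real: "cball (c::real) r - ball c r \<subseteq> {c - r, c + r}"
  by (auto simp: dist_real_def)

lemma V_lo:
  fixes F :: "real \<Rightarrow> real"
  assumes mono: "mono F" and cont: "continuous_on UNIV F" and p: "p > 0"
    and U: "open U" "E \<subseteq> U"
    and H: "\<And>x d. x \<in> E \<Longrightarrow> d > 0 \<Longrightarrow> \<exists>c r. 0 < r \<and> r < d \<and> x \<in> cball c r \<and> F (c + r) - F (c - r) < p * (2 * r)"
  obtains W where "open W" "W \<subseteq> U" "negligible (E - W)"
    "emeasure (interval_measure F) W \<le> ennreal p * emeasure lborel U"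
proof -
  define K where "K = {(c, r). 0 < r \<and> cball c r \<subseteq> U \<and> F (c + r) - F (c - r) < p * (2 * r)}"
  have KD: "0 < snd i \<and> cball (fst i) (snd i) \<subseteq> U \<and> F (fst i + snd i) - F (fst i - snd i) < p * (2 * snd i)"
    if "i \<in> K" for i using that by (cases i) (auto simp: K_def)
  have Kpos: "\<And>i. i \<in> K \<Longrightarrow> 0 < snd i" using KD by blast
  have cov: "\<exists>i. i \<in> K \<and> x \<in> cball (fst i) (snd i) \<and> snd i < d" if xE: "x \<in> E" and d0: "0 < d" for x d
  proof -
    have "x \<in> U" using U(2) xE by blast
    then obtain e where e: "e > 0" "ball x e \<subseteq> U" using U(1) open_contains_ball by metis
    have "min d (e/2) > 0" using d0 e(1) by simp
    then obtain c r where cr: "0 < r" "r < min d (e/2)" "x \<in> cball c r" "F (c + r) - F (c - r) < p * (2 * r)"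
      using H[OF xE] by blast
    have "cball c r \<subseteq> U" using cball_sub_ball[OF cr(3), of e] cr(2) e(2) by auto
    then show ?thesis using cr by (intro exI[of _ "(c, r)"]) (auto simp: K_def)
  qed
  obtain C where C: "countable C" "C \<subseteq> K"
     "pairwise (\<lambda>i j. disjnt (cball (fst i) (snd i)) (cball (fst j) (snd j))) C"
     "negligible (E - (\<Union>i \<in> C. cball (fst i) (snd i)))"
    by (rule Vitali_covering_theorem_cballs[of K snd E fst, OF Kpos cov])
  define W where "W = (\<Union>i\<in>C. ball (fst i) (snd i))"
  define B where "B = (\<Union>i\<in>C. cball (fst i) (snd i))"
  have "open W" unfolding W_def by auto
  moreover have "W \<subseteq> U"
  proof
    fix x assume "x \<in> W"
    then obtain i where i: "i \<in> C" "x \<in> ball (fst i) (snd i)" by (auto simp: W_def)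
    then have "cball (fst i) (snd i) \<subseteq> U" using C(2) KD by blast
    then show "x \<in> U" using i(2) by auto
  qed
  moreover have "negligible (E - W)"
  proof -
    have "E - W \<subseteq> (E - B) \<union> \<Union>((\<lambda>i. {fst i - snd i, fst i + snd i}) ` C)"
      using cball_minus_ball_real by (fastforce simp: W_def B_def)
    moreover have "negligible (\<Union>((\<lambda>i. {fst i - snd i, fst i + snd i}) ` C))"
      using C(1) by (intro negligible_countable_Union) auto
    ultimately show ?thesis using C(4) unfolding B_def by (meson negligible_Un negligible_subset)
  qed
  moreover have "emeasure (interval_measure F) W \<le> ennreal p * emeasure lborel U"
  proof -
    have "emeasure (interval_measure F) W \<le> emeasure (interval_measure F) B"
    proof (rule emeasure_mono)
      show "B \<in> sets (interval_measure F)" unfolding B_def using C(1)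
        by (simp add: sets.countable_UN'')
    qed (auto simp: W_def B_def)
    also have "\<dots> = 1 * emeasure (interval_measure F) B" by simp
    also have "\<dots> \<le> ennreal p * emeasure lborel B"
      unfolding B_def
    proof (rule cball_family_le[OF _ _ C(1) C(3)])
      fix i assume "i \<in> C"
      then have i: "0 < snd i" "F (fst i + snd i) - F (fst i - snd i) < p * (2 * snd i)"
        using KD[of i] C(2) \<open>i \<in> C\<close> by auto
      have "emeasure (interval_measure F) (cball (fst i) (snd i)) = ennreal (F (fst i + snd i) - F (fst i - snd i))"
        using imF_cball[OF mono cont] i by simp
      also have "\<dots> \<le> ennreal (p * (2 * snd i))" using i by (intro ennreal_leI) simp
      also have "\<dots> = ennreal p * emeasure lborel (cball (fst i) (snd i))"
        using i p by (simp add: lborel_cball ennreal_mult)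
      finally show "1 * emeasure (interval_measure F) (cball (fst i) (snd i)) \<le> ennreal p * emeasure lborel (cball (fst i) (snd i))" by simp
    qed auto
    also have "\<dots> \<le> ennreal p * emeasure lborel U"
    proof (intro mult_left_mono emeasure_mono)
      show "B \<subseteq> U" using C(2) KD unfolding B_def by blast
    qed (use U(1) in auto)
    finally show ?thesis .
  qed
  ultimately show ?thesis using that by blast
qed

lemma leb_borel: "A \<in> sets borel \<Longrightarrow> emeasure lebesgue A = emeasure lborel A"
  by (simp add: emeasure_completion main_part_sets)

lemma V_up:
  fixes F :: "real \<Rightarrow> real"
  assumes mono: "mono F" and cont: "continuous_on UNIV F" and q: "q > 0"
    and U: "open U" "E \<subseteq> U"
    and H: "\<And>x d. x \<in> E \<Longrightarrow> d > 0 \<Longrightarrow> \<exists>c r. 0 < r \<and> r < d \<and> x \<in> cball c r \<and> q * (2 * r) < F (c + r) - F (c - r)"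
  obtains T where "E \<subseteq> T" "T \<in> sets lebesgue"
    "ennreal q * emeasure lebesgue T \<le> emeasure (interval_measure F) U"
proof -
  define K where "K = {(c, r). 0 < r \<and> cball c r \<subseteq> U \<and> q * (2 * r) < F (c + r) - F (c - r)}"
  have KD: "0 < snd i \<and> cball (fst i) (snd i) \<subseteq> U \<and> q * (2 * snd i) < F (fst i + snd i) - F (fst i - snd i)"
    if "i \<in> K" for i using that by (cases i) (auto simp: K_def)
  have Kpos: "\<And>i. i \<in> K \<Longrightarrow> 0 < snd i" using KD by blast
  have cov: "\<exists>i. i \<in> K \<and> x \<in> cball (fst i) (snd i) \<and> snd i < d" if xE: "x \<in> E" and d0: "0 < d" for x d
  proof -
    have "x \<in> U" using U(2) xE by blast
    then obtain e where e: "e > 0" "ball x e \<subseteq> U" using U(1) open_contains_ball by metis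
    have "min d (e/2) > 0" using d0 e(1) by simp
    then obtain c r where cr: "0 < r" "r < min d (e/2)" "x \<in> cball c r" "q * (2 * r) < F (c + r) - F (c - r)"
      using H[OF xE] by blast
    have "cball c r \<subseteq> U" using cball_sub_ball[OF cr(3), of e] cr(2) e(2) by auto
    then show ?thesis using cr by (intro exI[of _ "(c, r)"]) (auto simp: K_def)
  qed
  obtain C where C: "countable C" "C \<subseteq> K"
     "pairwise (\<lambda>i j. disjnt (cball (fst i) (snd i)) (cball (fst j) (snd j))) C"
     "negligible (E - (\<Union>i \<in> C. cball (fst i) (snd i)))"
    by (rule Vitali_covering_theorem_cballs[of K snd E fst, OF Kpos cov])
  define B where "B = (\<Union>i\<in>C. cball (fst i) (snd i))"
  have Bb: "B \<in> sets borel" unfolding B_def using C(1) by (simp add: sets.countable_UN'')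
  define T where "T = B \<union> (E - B)"
  have "E \<subseteq> T" by (auto simp: T_def)
  moreover have "T \<in> sets lebesgue"
  proof -
    have "B \<in> sets lebesgue" using Bb by (metis sets_completionI_sets sets_lborel)
    moreover have "E - B \<in> sets lebesgue" using C(4) by (auto simp: B_def intro!: negligible_imp_sets)
    ultimately show ?thesis unfolding T_def by (rule sets.Un)
  qed
  moreover have "ennreal q * emeasure lebesgue T \<le> emeasure (interval_measure F) U"
  proof -
    have "emeasure lebesgue T = emeasure lebesgue B"
      unfolding T_def using Bb C(4) by (intro emeasure_Un_null_set) (auto simp: B_def negligible_iff_null_sets)
    also have "\<dots> = emeasure lborel B" using Bb by (rule leb_borel)
    finally have "ennreal q * emeasure lebesgue T = ennreal q * emeasure lborel B" by simp
    also have "\<dots> \<le> 1 * emeasure (interval_measure F) B"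
      unfolding B_def
    proof (rule cball_family_le[OF _ _ C(1) C(3)])
      fix i assume "i \<in> C"
      then have i: "0 < snd i" "q * (2 * snd i) < F (fst i + snd i) - F (fst i - snd i)"
        using KD[of i] C(2) by auto
      have "ennreal q * emeasure lborel (cball (fst i) (snd i)) = ennreal (q * (2 * snd i))"
        using i q by (simp add: lborel_cball ennreal_mult)
      also have "\<dots> \<le> ennreal (F (fst i + snd i) - F (fst i - snd i))" using i by (intro ennreal_leI) simp
      also have "\<dots> = emeasure (interval_measure F) (cball (fst i) (snd i))"
        using imF_cball[OF mono cont] i by simp
      finally show "ennreal q * emeasure lborel (cball (fst i) (snd i)) \<le> 1 * emeasure (interval_measure F) (cball (fst i) (snd i))" 
        by simp
    qed auto
    also have "\<dots> \<le> emeasure (interval_measure F) U"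
      unfolding mult_1
    proof (rule emeasure_mono)
      show "B \<subseteq> U" using C(2) KD unfolding B_def by blast
    qed (use U(1) in auto)
    finally show ?thesis .
  qed
  ultimately show ?thesis using that by blast
qed

definition lo :: "(real \<Rightarrow> real) \<Rightarrow> real \<Rightarrow> real set" where
  "lo F p = {x. \<forall>d>0. \<exists>c r. 0 < r \<and> r < d \<and> x \<in> cball c r \<and> F (c + r) - F (c - r) < p * (2 * r)}"

definition up :: "(real \<Rightarrow> real) \<Rightarrow> real \<Rightarrow> real set" where
  "up F q = {x. \<forall>d>0. \<exists>c r. 0 < r \<and> r < d \<and> x \<in> cball c r \<and> q * (2 * r) < F (c + r) - F (c - r)}"

lemma lemA:
  fixes F :: "real \<Rightarrow> real"
  assumes mono: "mono F" and cont: "continuous_on UNIV F" and pq: "0 < p" "p < q"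
    and E: "E \<subseteq> lo F p" "E \<subseteq> up F q" "E \<subseteq> cball 0 R"
  shows "negligible E"
proof (rule negligible_by_outer[OF E(3)])
  show "cball 0 R \<in> lmeasurable" by simp
  show "0 \<le> p / q" "p / q < 1" using pq by auto
  fix U assume U: "open U" "E \<subseteq> U" "U \<in> lmeasurable"
  obtain W where W: "open W" "W \<subseteq> U" "negligible (E - W)"
      "emeasure (interval_measure F) W \<le> ennreal p * emeasure lborel U"
  proof (rule V_lo[OF mono cont pq(1) U(1) U(2)])
    fix x d assume "x \<in> E" "(0::real) < d"
    then show "\<exists>c r. 0 < r \<and> r < d \<and> x \<in> cball c r \<and> F (c + r) - F (c - r) < p * (2 * r)"
      using E(1) unfolding lo_def by blast
  qed blast
  have q0: "q > 0" using pq by simp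
  obtain T where T: "E \<inter> W \<subseteq> T" "T \<in> sets lebesgue"
      "ennreal q * emeasure lebesgue T \<le> emeasure (interval_measure F) W"
  proof (rule V_up[OF mono cont q0 W(1), of "E \<inter> W"])
    fix x d assume "x \<in> E \<inter> W" "(0::real) < d"
    then show "\<exists>c r. 0 < r \<and> r < d \<and> x \<in> cball c r \<and> q * (2 * r) < F (c + r) - F (c - r)"
      using E(2) unfolding up_def by blast
  qed auto
  define T' where "T' = T \<union> (E - W)"
  have ET': "E \<subseteq> T'" using T(1) by (auto simp: T'_def)
  have T'l: "T' \<in> sets lebesgue" unfolding T'_def using T(2) negligible_imp_sets[OF W(3)]
    by (rule sets.Un)
  have eT': "emeasure lebesgue T' = emeasure lebesgue T"
    unfolding T'_def using T(2) W(3) by (intro emeasure_Un_null_set) (auto simp: negligible_iff_null_sets)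
  have Ub: "U \<in> sets borel" using U(1) by simp
  have eU: "emeasure lborel U = ennreal (measure lebesgue U)"
    using leb_borel[OF Ub] emeasure_eq_measure2[OF U(3)] by simp
  have mU0: "0 \<le> measure lebesgue U" by simp
  have key: "ennreal q * emeasure lebesgue T' \<le> ennreal (p * measure lebesgue U)"
    using T(3) W(4) eT' eU pq by (simp add: ennreal_mult)
  have fin: "emeasure lebesgue T' \<noteq> \<infinity>"
  proof
    assume "emeasure lebesgue T' = \<infinity>"
    then have "ennreal q * emeasure lebesgue T' = \<infinity>" using q0 by (simp add: ennreal_mult_top)
    with key have "\<infinity> \<le> ennreal (p * measure lebesgue U)" by simp
    then show False by (simp add: top_unique)
  qed
  have T'm: "T' \<in> lmeasurable" using T'l fin by (simp add: fmeasurable_def top.not_eq_extremum)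
  have "ennreal (q * measure lebesgue T') \<le> ennreal (p * measure lebesgue U)"
    using key emeasure_eq_measure2[OF T'm] q0 by (simp add: ennreal_mult)
  then have "q * measure lebesgue T' \<le> p * measure lebesgue U"
    using pq mU0 by (subst (asm) ennreal_le_iff) auto
  then have "measure lebesgue T' \<le> p / q * measure lebesgue U"
    using q0 by (simp add: field_simps)
  then show "\<exists>T. E \<subseteq> T \<and> T \<in> lmeasurable \<and> measure lebesgue T \<le> p / q * measure lebesgue U"
    using ET' T'm by blast
qed

lemma lemB:
  fixes F :: "real \<Rightarrow> real"
  assumes mono: "mono F" and cont: "continuous_on UNIV F"
    and E: "\<And>n::nat. E \<subseteq> up F (real n)" "E \<subseteq> cball 0 R"
  shows "negligible E"
  unfolding negligible_outer_le
proof (intro allI impI)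
  fix e :: real assume e: "e > 0"
  define R' where "R' = \<bar>R\<bar> + 1"
  have R': "R' > 0" "E \<subseteq> ball 0 R'" using E(2) by (auto simp: R'_def)
  define M where "M = F R' - F (- R')"
  have "F (- R') \<le> F R'" using mono R' by (simp add: monoD)
  then have M0: "M \<ge> 0" by (simp add: M_def)
  have muU: "emeasure (interval_measure F) (ball 0 R') \<le> ennreal M"
  proof -
    have "emeasure (interval_measure F) (ball 0 R') \<le> emeasure (interval_measure F) (cball 0 R')"
      by (rule emeasure_mono) auto
    also have "\<dots> = ennreal M" using imF_cball[OF mono cont, of R' 0] R' by (simp add: M_def)
    finally show ?thesis .
  qed
  define n where "n = nat (ceiling ((M + 1) / e)) + 1"
  define q where "q = real n"
  have q0: "q > 0" by (simp add: q_def n_def)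
  have "(M + 1) / e \<le> real (nat (ceiling ((M + 1) / e)))" by linarith
  then have "(M + 1) / e < q" by (simp add: q_def n_def)
  then have qe: "M < q * e" using e by (simp add: field_simps)
  obtain T where T: "E \<subseteq> T" "T \<in> sets lebesgue"
      "ennreal q * emeasure lebesgue T \<le> emeasure (interval_measure F) (ball 0 R')"
  proof (rule V_up[OF mono cont q0 _ R'(2)])
    fix x d assume "x \<in> E" "(0::real) < d"
    then show "\<exists>c r. 0 < r \<and> r < d \<and> x \<in> cball c r \<and> q * (2 * r) < F (c + r) - F (c - r)"
      using E(1)[of n] unfolding up_def q_def by blast
  qed auto
  have key: "ennreal q * emeasure lebesgue T \<le> ennreal M" using T(3) muU by simp
  have fin: "emeasure lebesgue T \<noteq> \<infinity>"
  proof
    assume "emeasure lebesgue T = \<infinity>"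
    then have "ennreal q * emeasure lebesgue T = \<infinity>" using q0 by (simp add: ennreal_mult_top)
    with key have "\<infinity> \<le> ennreal M" by simp
    then show False by (simp add: top_unique)
  qed
  have Tm: "T \<in> lmeasurable" using T(2) fin by (simp add: fmeasurable_def top.not_eq_extremum)
  have "ennreal (q * measure lebesgue T) \<le> ennreal M"
    using key emeasure_eq_measure2[OF Tm] q0 by (simp add: ennreal_mult)
  then have "q * measure lebesgue T \<le> M"
    using M0 by (subst (asm) ennreal_le_iff) auto
  then have "q * measure lebesgue T \<le> q * e" using qe by linarith
  then have "measure lebesgue T \<le> e" using q0 by simp
  then show "\<exists>T. E \<subseteq> T \<and> T \<in> lmeasurable \<and> measure lebesgue T \<le> e"
    using T(1) Tm by blast
qed

lemma diff_crit:
  fixes G :: "real \<Rightarrow> real"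
  assumes C: "\<And>e. e > 0 \<Longrightarrow> \<exists>d>0. \<forall>h1 h2. h1 \<noteq> 0 \<and> \<bar>h1\<bar> < d \<and> h2 \<noteq> 0 \<and> \<bar>h2\<bar> < d \<longrightarrow> \<bar>G h1 - G h2\<bar> < e"
  shows "\<exists>L. (G \<midarrow>0\<rightarrow> L)"
proof -
  define s where "s m = G (inverse (real (Suc m)))" for m :: nat
  have inv0: "(\<lambda>m. inverse (real (Suc m))) \<longlonglongrightarrow> 0" by (rule LIMSEQ_inverse_real_of_nat)
  have evd: "\<forall>\<^sub>F m in sequentially. inverse (real (Suc m)) < d" if "d > 0" for d
    using inv0 that by (simp add: order_tendsto_iff)
  have "Cauchy s"
  proof (rule metric_CauchyI)
    fix e :: real assume "e > 0"
    then obtain d where d: "d > 0" "\<forall>h1 h2. h1 \<noteq> 0 \<and> \<bar>h1\<bar> < d \<and> h2 \<noteq> 0 \<and> \<bar>h2\<bar> < d \<longrightarrow> \<bar>G h1 - G h2\<bar> < e"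
      using C by blast
    obtain N where N: "\<And>m. m \<ge> N \<Longrightarrow> inverse (real (Suc m)) < d"
      using evd[OF d(1)] unfolding eventually_sequentially by blast
    show "\<exists>M. \<forall>m\<ge>M. \<forall>n\<ge>M. dist (s m) (s n) < e"
    proof (intro exI[of _ N] allI impI)
      fix m n assume "m \<ge> N" "n \<ge> N"
      then show "dist (s m) (s n) < e" using d(2) N[of m] N[of n] by (simp add: s_def dist_real_def)
    qed
  qed
  then obtain L where L: "s \<longlonglongrightarrow> L" using Cauchy_convergent_iff convergent_def by blast
  have "G \<midarrow>0\<rightarrow> L"
  proof (rule LIM_I)
    fix r :: real assume r: "r > 0"
    then obtain d where d: "d > 0" "\<forall>h1 h2. h1 \<noteq> 0 \<and> \<bar>h1\<bar> < d \<and> h2 \<noteq> 0 \<and> \<bar>h2\<bar> < d \<longrightarrow> \<bar>G h1 - G h2\<bar> < r / 2"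
      using C[of "r/2"] by auto
    have "\<forall>\<^sub>F m in sequentially. dist (s m) L < r / 2" using L r unfolding tendsto_iff by (meson half_gt_zero)
    then have "\<forall>\<^sub>F m in sequentially. dist (s m) L < r / 2 \<and> inverse (real (Suc m)) < d"
      using evd[OF d(1)] by (rule eventually_conj)
    then obtain m where m: "dist (s m) L < r / 2" "inverse (real (Suc m)) < d"
      unfolding eventually_sequentially by blast
    show "\<exists>s>0. \<forall>x. x \<noteq> 0 \<and> norm (x - 0) < s \<longrightarrow> norm (G x - L) < r"
    proof (intro exI[of _ d] conjI allI impI)
      fix x :: real assume x: "x \<noteq> 0 \<and> norm (x - 0) < d"
      have pos: "inverse (real (Suc m)) > 0" by simp
      have "\<bar>G x - s m\<bar> < r / 2" using d(2) x m(2) pos unfolding s_def by auto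
      then show "norm (G x - L) < r" using m(1) unfolding dist_real_def real_norm_def by linarith
    qed (use d in auto)
  qed
  then show ?thesis by blast
qed

lemma negligible_by_balls:
  fixes S :: "real set"
  assumes "\<And>R::nat. negligible (S \<inter> cball 0 (real R))"
  shows "negligible S"
proof -
  have "S = \<Union>(range (\<lambda>R::nat. S \<inter> cball 0 (real R)))"
  proof (intro set_eqI iffI)
    fix x assume "x \<in> S"
    obtain R :: nat where "\<bar>x\<bar> \<le> real R" using real_arch_simple by blast
    then show "x \<in> \<Union>(range (\<lambda>R::nat. S \<inter> cball 0 (real R)))" using \<open>x \<in> S\<close> by auto
  qed auto
  moreover have "negligible (\<Union>(range (\<lambda>R::nat. S \<inter> cball 0 (real R))))"
    using assms by (intro negligible_countable_Union) auto
  ultimately show ?thesis by simp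
qed

lemma G_as_Q:
  fixes F :: "real \<Rightarrow> real"
  assumes "h \<noteq> 0"
  shows "(F (x + h) - F x) / h = (F ((x + h/2) + \<bar>h\<bar>/2) - F ((x + h/2) - \<bar>h\<bar>/2)) / (2 * (\<bar>h\<bar>/2))"
    "x \<in> cball (x + h/2) (\<bar>h\<bar>/2)"
proof -
  show "x \<in> cball (x + h/2) (\<bar>h\<bar>/2)" by (simp add: dist_real_def)
  show "(F (x + h) - F x) / h = (F ((x + h/2) + \<bar>h\<bar>/2) - F ((x + h/2) - \<bar>h\<bar>/2)) / (2 * (\<bar>h\<bar>/2))"
  proof (cases "h > 0")
    case True
    then have e: "x + h/2 + \<bar>h\<bar>/2 = x + h" "x + h/2 - \<bar>h\<bar>/2 = x" "2 * (\<bar>h\<bar>/2) = h" by auto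
    show ?thesis unfolding e ..
  next
    case False
    with assms have "h < 0" by simp
    then have e: "x + h/2 + \<bar>h\<bar>/2 = x" "x + h/2 - \<bar>h\<bar>/2 = x + h" "2 * (\<bar>h\<bar>/2) = - h" by auto
    show ?thesis unfolding e using assms by (simp add: field_simps)
  qed
qed

theorem mono_diff_ae:
  fixes F :: "real \<Rightarrow> real"
  assumes mono: "mono F" and cont: "continuous_on UNIV F"
  shows "negligible {x. \<not> F differentiable (at x)}"
proof -
  define X1 where "X1 = (\<Union>jk\<in>(UNIV::(nat\<times>nat) set). lo F (real (Suc (fst jk)) / real (Suc (snd jk)))
                                    \<inter> up F (real (Suc (Suc (fst jk))) / real (Suc (snd jk))))"
  define X2 where "X2 = (\<Inter>n::nat. up F (real n))"
  have negX1: "negligible X1"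
  proof (rule negligible_by_balls)
    fix R :: nat
    have "X1 \<inter> cball 0 (real R) = (\<Union>jk\<in>(UNIV::(nat\<times>nat) set). lo F (real (Suc (fst jk)) / real (Suc (snd jk)))
                                    \<inter> up F (real (Suc (Suc (fst jk))) / real (Suc (snd jk))) \<inter> cball 0 (real R))"
      by (auto simp: X1_def)
    also have "negligible \<dots>"
    proof (intro negligible_countable_Union countable_image, simp, clarify)
      fix j k :: nat
      show "negligible (lo F (real (Suc j) / real (Suc k)) \<inter> up F (real (Suc (Suc j)) / real (Suc k)) \<inter> cball 0 (real R))"
        by (rule lemA[OF mono cont, where p = "real (Suc j) / real (Suc k)" and q = "real (Suc (Suc j)) / real (Suc k)"])
           (auto simp: divide_strict_right_mono)
    qed
    finally show "negligible (X1 \<inter> cball 0 (real R))" .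
  qed
  have negX2: "negligible X2"
    by (rule negligible_by_balls, rule lemB[OF mono cont, where R = "real R" for R]) (auto simp: X2_def)
  have sub: "{x. \<not> F differentiable (at x)} \<subseteq> X1 \<union> X2"
  proof (rule subsetI, rule ccontr)
    fix x assume x: "x \<in> {x. \<not> F differentiable (at x)}" and nx: "x \<notin> X1 \<union> X2"
    define incr where "incr c r = F (c + r) - F (c - r)" for c r
    obtain n :: nat where "x \<notin> up F (real n)" using nx by (auto simp: X2_def)
    then have "\<exists>d0>0. \<forall>c r. 0 < r \<and> r < d0 \<and> x \<in> cball c r \<longrightarrow> incr c r \<le> real n * (2 * r)"
      unfolding up_def incr_def by (fastforce simp: not_less)
    then obtain d0 where d0: "d0 > 0" "\<And>c r. 0 < r \<Longrightarrow> r < d0 \<Longrightarrow> x \<in> cball c r \<Longrightarrow> incr c r \<le> real n * (2 * r)"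
      by blast
    have inc0: "0 \<le> incr c r" if "0 < r" for c r
      using mono that by (simp add: incr_def monoD)
    have nX1: "x \<notin> lo F (real (Suc j) / real (Suc k)) \<or> x \<notin> up F (real (Suc (Suc j)) / real (Suc k))" for j k
      using nx by (auto simp: X1_def)
    define G where "G h = (F (x + h) - F x) / h" for h
    have GQ: "G h = incr (x + h/2) (\<bar>h\<bar>/2) / (2 * (\<bar>h\<bar>/2))" "x \<in> cball (x + h/2) (\<bar>h\<bar>/2)" if "h \<noteq> 0" for h
      using G_as_Q(1)[OF that, where F=F and x=x] G_as_Q(2)[OF that, where x=x] unfolding G_def incr_def by auto
    have Cau: "\<exists>d>0. \<forall>h1 h2. h1 \<noteq> 0 \<and> \<bar>h1\<bar> < d \<and> h2 \<noteq> 0 \<and> \<bar>h2\<bar> < d \<longrightarrow> \<bar>G h1 - G h2\<bar> < e" if e: "e > 0" for e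
    proof -
      obtain k :: nat where k: "3 / e < real k" using reals_Archimedean2 by blast
      define K where "K = real (Suc k)"
      have K0: "K > 0" by (simp add: K_def)
      have kK: "3 / K < e" using k e by (simp add: K_def field_simps)
      define P where "P j d \<longleftrightarrow> (\<forall>c r. 0 < r \<and> r < d \<and> x \<in> cball c r \<longrightarrow> real (Suc j) / K * (2 * r) \<le> incr c r)
                    \<or> (\<forall>c r. 0 < r \<and> r < d \<and> x \<in> cball c r \<longrightarrow> incr c r \<le> real (Suc (Suc j)) / K * (2 * r))" for j d
      have Pex: "\<exists>d>0. P j d" for j
        using nX1[of j k]
      proof
        assume "x \<notin> lo F (real (Suc j) / real (Suc k))"
        then obtain d where d: "d > 0" "\<forall>c r. 0 < r \<and> r < d \<and> x \<in> cball c r \<longrightarrow> \<not> (F (c + r) - F (c - r) < real (Suc j) / real (Suc k) * (2 * r))"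
          unfolding lo_def by blast
        have "P j d" unfolding P_def incr_def K_def using d(2) by (intro disjI1 allI impI) (meson not_less)
        then show ?thesis using d(1) by blast
      next
        assume "x \<notin> up F (real (Suc (Suc j)) / real (Suc k))"
        then obtain d where d: "d > 0" "\<forall>c r. 0 < r \<and> r < d \<and> x \<in> cball c r \<longrightarrow> \<not> (real (Suc (Suc j)) / real (Suc k) * (2 * r) < F (c + r) - F (c - r))"
          unfolding up_def by blast
        have "P j d" unfolding P_def incr_def K_def using d(2) by (intro disjI2 allI impI) (meson not_less)
        then show ?thesis using d(1) by blast
      qed
      have Pmono: "P j d'" if "P j d" "d' \<le> d" for j d d'
        using that unfolding P_def by (meson less_le_trans)
      define J where "J = {..n * Suc k}"
      obtain D where D: "\<And>j. D j > 0 \<and> P j (D j)" using Pex by metis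
      define d where "d = min d0 (Min (D ` J))"
      have d0': "d > 0" using d0 D by (simp add: d_def J_def)
      have dP: "P j d" if "j \<in> J" for j
      proof -
        have "Min (D ` J) \<le> D j" using that by (intro Min_le) (auto simp: J_def)
        then have "d \<le> D j" unfolding d_def by linarith
        then show ?thesis using D Pmono by blast
      qed
      have dd0: "d \<le> d0" by (simp add: d_def)
      have Gb: "0 \<le> G h \<and> G h \<le> real n" if "h \<noteq> 0" "\<bar>h\<bar> < d" for h
      proof -
        have r: "0 < \<bar>h\<bar>/2" "\<bar>h\<bar>/2 < d0" using that dd0 by auto
        have "incr (x + h/2) (\<bar>h\<bar>/2) \<le> real n * (2 * (\<bar>h\<bar>/2))" using d0(2)[OF r GQ(2)[OF that(1)]] .
        moreover have "0 \<le> incr (x + h/2) (\<bar>h\<bar>/2)" using inc0 r by blast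
        ultimately show ?thesis using GQ(1)[OF that(1)] r by (simp add: divide_le_eq)
      qed
      have one: "G h2 < G h1 + 3 / K" if h: "h1 \<noteq> 0" "\<bar>h1\<bar> < d" "h2 \<noteq> 0" "\<bar>h2\<bar> < d" for h1 h2
      proof (rule ccontr)
        assume "\<not> G h2 < G h1 + 3 / K"
        then have big: "G h1 + 3 / K \<le> G h2" by simp
        define a where "a = G h1"
        have a: "0 \<le> a" "a \<le> real n" using Gb[OF h(1,2)] by (auto simp: a_def)
        define fl where "fl = floor (a * K)"
        have fl0: "0 \<le> fl" using a K0 by (simp add: fl_def)
        define j where "j = nat fl"
        have rj: "real j = real_of_int fl" using fl0 by (simp add: j_def)
        have flb: "real_of_int fl \<le> a * K" "a * K < real_of_int fl + 1" unfolding fl_def by linarith+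
        have pj1: "a < real (Suc j) / K" using flb rj K0 by (simp add: field_simps)
        have pj2: "real (Suc (Suc j)) / K \<le> a + 2 / K" using flb rj K0 by (simp add: field_simps)
        have "a * K \<le> real n * K" using a K0 by (intro mult_right_mono) auto
        then have "real j \<le> real n * K" using flb rj by linarith
        then have "j \<le> n * Suc k" unfolding K_def by (metis of_nat_le_iff of_nat_mult)
        then have "j \<in> J" by (simp add: J_def)
        then have Pj: "P j d" by (rule dP)
        have r1: "0 < \<bar>h1\<bar>/2" "\<bar>h1\<bar>/2 < d" using h by auto
        have r2: "0 < \<bar>h2\<bar>/2" "\<bar>h2\<bar>/2 < d" using h by auto
        show False using Pj unfolding P_def
        proof
          assume "\<forall>c r. 0 < r \<and> r < d \<and> x \<in> cball c r \<longrightarrow> real (Suc j) / K * (2 * r) \<le> incr c r"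
          then have "real (Suc j) / K * (2 * (\<bar>h1\<bar>/2)) \<le> incr (x + h1/2) (\<bar>h1\<bar>/2)"
            using r1 GQ(2)[OF h(1)] by blast
          then have "real (Suc j) / K \<le> a" using GQ(1)[OF h(1)] r1 unfolding a_def by (simp add: le_divide_eq)
          then show False using pj1 by simp
        next
          assume "\<forall>c r. 0 < r \<and> r < d \<and> x \<in> cball c r \<longrightarrow> incr c r \<le> real (Suc (Suc j)) / K * (2 * r)"
          then have "incr (x + h2/2) (\<bar>h2\<bar>/2) \<le> real (Suc (Suc j)) / K * (2 * (\<bar>h2\<bar>/2))"
            using r2 GQ(2)[OF h(3)] by blast
          then have "G h2 \<le> real (Suc (Suc j)) / K" using GQ(1)[OF h(3)] r2 by (simp add: divide_le_eq)
          then show False using pj2 big K0 unfolding a_def by (simp add: field_simps)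
        qed
      qed
      show ?thesis
      proof (intro exI[of _ d] conjI allI impI)
        fix h1 h2 assume h: "h1 \<noteq> 0 \<and> \<bar>h1\<bar> < d \<and> h2 \<noteq> 0 \<and> \<bar>h2\<bar> < d"
        have "G h2 < G h1 + 3 / K" "G h1 < G h2 + 3 / K" using one h by auto
        then show "\<bar>G h1 - G h2\<bar> < e" using kK by linarith
      qed (use d0' in auto)
    qed
    obtain L where "G \<midarrow>0\<rightarrow> L" using diff_crit[OF Cau] by blast
    then have "(F has_real_derivative L) (at x)" unfolding DERIV_def G_def .
    then have "F differentiable (at x)" by (auto simp: differentiable_def has_field_derivative_def)
    then show False using x by simp
  qed
  show ?thesis using negligible_subset[OF negligible_Un[OF negX1 negX2] sub] .
qed

definition fam :: "real \<Rightarrow> real \<Rightarrow> nat \<Rightarrow> (nat \<Rightarrow> real \<times> real) \<Rightarrow> bool" where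
  "fam x y n I \<longleftrightarrow> (\<forall>k<n. x \<le> fst (I k) \<and> fst (I k) \<le> snd (I k) \<and> snd (I k) \<le> y) \<and>
     (\<forall>j<n. \<forall>k<n. j \<noteq> k \<longrightarrow> {fst (I j)<..<snd (I j)} \<inter> {fst (I k)<..<snd (I k)} = {})"

definition vsum :: "(real \<Rightarrow> 'a::real_normed_vector) \<Rightarrow> nat \<Rightarrow> (nat \<Rightarrow> real \<times> real) \<Rightarrow> real" where
  "vsum f n I = (\<Sum>k<n. norm (f (snd (I k)) - f (fst (I k))))"

definition lsum :: "nat \<Rightarrow> (nat \<Rightarrow> real \<times> real) \<Rightarrow> real" where
  "lsum n I = (\<Sum>k<n. snd (I k) - fst (I k))"

lemma abs_cont_on_fam:
  "abs_cont_on a b f \<longleftrightarrow> (\<forall>\<epsilon>>0. \<exists>\<delta>>0. \<forall>n I. fam a b n I \<and> lsum n I < \<delta> \<longrightarrow> vsum f n I < \<epsilon>)"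
  unfolding abs_cont_on_def fam_def lsum_def vsum_def by (simp only: conj_assoc)

lemma fam_shrink:
  assumes "fam x y n I" "x' \<le> y'"
    and "\<And>k. k < n \<Longrightarrow> x' \<le> fst (J k) \<and> fst (J k) \<le> snd (J k) \<and> snd (J k) \<le> y'"
    and "\<And>k. k < n \<Longrightarrow> {fst (J k)<..<snd (J k)} \<subseteq> {fst (I k)<..<snd (I k)}"
  shows "fam x' y' n J"
proof -
  have d: "{fst (J j)<..<snd (J j)} \<inter> {fst (J k)<..<snd (J k)} = {}" if "j < n" "k < n" "j \<noteq> k" for j k
  proof -
    have "{fst (I j)<..<snd (I j)} \<inter> {fst (I k)<..<snd (I k)} = {}"
      using assms(1) that unfolding fam_def by blast
    then show ?thesis using assms(4)[OF that(1)] assms(4)[OF that(2)] by blast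
  qed
  show ?thesis unfolding fam_def
  proof (intro conjI allI impI)
    fix k assume "k < n" then show "x' \<le> fst (J k)" "fst (J k) \<le> snd (J k)" "snd (J k) \<le> y'" using assms(3) by auto
  next
    fix j k assume "j < n" "k < n" "j \<noteq> k" then show "{fst (J j)<..<snd (J j)} \<inter> {fst (J k)<..<snd (J k)} = {}" by (rule d)
  qed
qed

lemma vsum_nonneg: "0 \<le> vsum f n I"
  unfolding vsum_def by (simp add: sum_nonneg)

lemma lsum_le:
  assumes "fam x y n I" "x \<le> y"
  shows "lsum n I \<le> y - x"
proof -
  define A where "A k = {fst (I k)<..<snd (I k)}" for k
  have le: "\<And>k. k < n \<Longrightarrow> fst (I k) \<le> snd (I k)" using assms(1) by (auto simp: fam_def)
  have "lsum n I = (\<Sum>k<n. measure lborel (A k))"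
    unfolding lsum_def A_def using le by (intro sum.cong) (auto simp: measure_lborel_Ioo)
  also have "\<dots> = measure lborel (\<Union>(A ` {..<n}))"
  proof (rule measure_finite_Union[symmetric])
    show "A ` {..<n} \<subseteq> sets lborel" by (auto simp: A_def)
    show "disjoint_family_on A {..<n}" using assms(1) by (auto simp: A_def disjoint_family_on_def fam_def)
  next
    fix k assume "k \<in> {..<n}" then show "emeasure lborel (A k) \<noteq> \<infinity>" using le by (simp add: A_def)
  qed simp
  also have "\<dots> \<le> measure lborel {x..y}"
  proof (rule measure_mono_fmeasurable)
    show "\<Union>(A ` {..<n}) \<subseteq> {x..y}" using assms(1) by (auto simp: A_def fam_def)
    show "{x..y} \<in> fmeasurable lborel" by (simp add: fmeasurable_def emeasure_lborel_Icc_eq)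
    show "\<Union>(A ` {..<n}) \<in> sets lborel" by (intro sets.finite_UN) (auto simp: A_def)
  qed
  also have "\<dots> = y - x" using assms(2) by simp
  finally show ?thesis .
qed

definition splitL :: "real \<Rightarrow> (nat \<Rightarrow> real \<times> real) \<Rightarrow> nat \<Rightarrow> real \<times> real" where
  "splitL c I k = (min (fst (I k)) c, min (snd (I k)) c)"
definition splitR :: "real \<Rightarrow> (nat \<Rightarrow> real \<times> real) \<Rightarrow> nat \<Rightarrow> real \<times> real" where
  "splitR c I k = (max (fst (I k)) c, max (snd (I k)) c)"

lemma split_fam:
  assumes "fam x y n I" "x \<le> c" "c \<le> y"
  shows "fam x c n (splitL c I)" "fam c y n (splitR c I)"
proof -
  have I: "x \<le> fst (I k) \<and> fst (I k) \<le> snd (I k) \<and> snd (I k) \<le> y" if "k < n" for k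
    using assms(1) that unfolding fam_def by blast
  show "fam x c n (splitL c I)"
  proof (rule fam_shrink[OF assms(1) assms(2)])
    fix k assume k: "k < n"
    have "min (fst (I k)) c \<le> min (snd (I k)) c" using I[OF k] by linarith
    then show "x \<le> fst (splitL c I k) \<and> fst (splitL c I k) \<le> snd (splitL c I k) \<and> snd (splitL c I k) \<le> c"
      using I[OF k] assms(2) unfolding splitL_def by simp
    show "{fst (splitL c I k)<..<snd (splitL c I k)} \<subseteq> {fst (I k)<..<snd (I k)}"
    proof
      fix z assume "z \<in> {fst (splitL c I k)<..<snd (splitL c I k)}"
      then have "min (fst (I k)) c < z" "z < min (snd (I k)) c" by (simp_all add: splitL_def)
      then show "z \<in> {fst (I k)<..<snd (I k)}" by (auto simp: min_less_iff_disj)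
    qed
  qed
  show "fam c y n (splitR c I)"
  proof (rule fam_shrink[OF assms(1) assms(3)])
    fix k assume k: "k < n"
    have "max (fst (I k)) c \<le> max (snd (I k)) c" using I[OF k] by linarith
    then show "c \<le> fst (splitR c I k) \<and> fst (splitR c I k) \<le> snd (splitR c I k) \<and> snd (splitR c I k) \<le> y"
      using I[OF k] assms(3) unfolding splitR_def by simp
    show "{fst (splitR c I k)<..<snd (splitR c I k)} \<subseteq> {fst (I k)<..<snd (I k)}"
    proof
      fix z assume "z \<in> {fst (splitR c I k)<..<snd (splitR c I k)}"
      then have "max (fst (I k)) c < z" "z < max (snd (I k)) c" by (simp_all add: splitR_def)
      then show "z \<in> {fst (I k)<..<snd (I k)}" by (auto simp: less_max_iff_disj)
    qed
  qed
qed

lemma split_vsum: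
  fixes f :: "real \<Rightarrow> 'a::real_normed_vector"
  assumes "fam x y n I"
  shows "vsum f n I \<le> vsum f n (splitL c I) + vsum f n (splitR c I)"
proof -
  have "norm (f (snd (I k)) - f (fst (I k))) \<le>
        norm (f (snd (splitL c I k)) - f (fst (splitL c I k))) + norm (f (snd (splitR c I k)) - f (fst (splitR c I k)))"
    if "k < n" for k
  proof -
    obtain u v where Ik: "I k = (u, v)" by (cases "I k")
    have uv: "u \<le> v" using assms that Ik by (auto simp: fam_def)
    have main: "norm (f v - f u) \<le> norm (f (min v c) - f (min u c)) + norm (f (max v c) - f (max u c))"
    proof (cases "v \<le> c")
      case True
      then have "min v c = v" "min u c = u" "max v c = c" "max u c = c" using uv by auto
      then show ?thesis by simp
    next
      case F: False
      show ?thesis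
      proof (cases "c \<le> u")
        case True
        then have "min v c = c" "min u c = c" "max v c = v" "max u c = u" using uv F by auto
        then show ?thesis by simp
      next
        case False
        then have "min u c = u" "min v c = c" "max u c = c" "max v c = v" using F by auto
        then show ?thesis using norm_triangle_ineq[of "f c - f u" "f v - f c"] by (simp add: add.commute)
      qed
    qed
    show ?thesis using main by (simp add: splitL_def splitR_def Ik)
  qed
  then have "(\<Sum>k<n. norm (f (snd (I k)) - f (fst (I k)))) \<le> (\<Sum>k<n. norm (f (snd (splitL c I k)) - f (fst (splitL c I k))) + norm (f (snd (splitR c I k)) - f (fst (splitR c I k))))"
    by (intro sum_mono) auto
  then show ?thesis unfolding vsum_def by (simp add: sum.distrib)
qed

lemma fam_mono: "fam x y n I \<Longrightarrow> x' \<le> x \<Longrightarrow> y \<le> y' \<Longrightarrow> fam x' y' n I"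
  unfolding fam_def by force

lemma fam_degenerate:
  assumes "fam a a n I"
  shows "vsum f n I = 0"
proof -
  have "\<And>k. k < n \<Longrightarrow> fst (I k) = a \<and> snd (I k) = a" using assms unfolding fam_def by force
  then show ?thesis unfolding vsum_def by (intro sum.neutral) auto
qed

lemma ac_bv:
  fixes f :: "real \<Rightarrow> 'a::real_normed_vector"
  assumes ac: "abs_cont_on a b f" and ab: "a \<le> b"
  shows "\<exists>B. \<forall>n I. fam a b n I \<longrightarrow> vsum f n I \<le> B"
proof -
  obtain \<delta> where \<delta>: "\<delta> > 0" "\<And>n I. fam a b n I \<Longrightarrow> lsum n I < \<delta> \<Longrightarrow> vsum f n I < 1"
    using ac unfolding abs_cont_on_fam by (meson zero_less_one)
  define h where "h = \<delta> / 2"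
  have h: "h > 0" "h < \<delta>" using \<delta> by (auto simp: h_def)
  have claim: "\<forall>y. a \<le> y \<longrightarrow> y \<le> b \<longrightarrow> y \<le> a + real m * h \<longrightarrow> (\<forall>n I. fam a y n I \<longrightarrow> vsum f n I \<le> real m)" for m
  proof (induction m)
    case 0
    show ?case
    proof (intro allI impI)
      fix y n I assume "a \<le> y" "y \<le> b" "y \<le> a + real 0 * h" "fam a y n I"
      then have "fam a a n I" using fam_mono by (metis add.right_neutral mult_zero_left of_nat_0 order_refl)
      then have "vsum f n I = 0" by (rule fam_degenerate)
      then show "vsum f n I \<le> real 0" by simp
    qed
  next
    case (Suc m)
    show ?case
    proof (intro allI impI)
      fix y n I assume y: "a \<le> y" "y \<le> b" "y \<le> a + real (Suc m) * h" and F: "fam a y n I"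
      show "vsum f n I \<le> real (Suc m)"
      proof (cases "y \<le> a + real m * h")
        case True then show ?thesis using Suc.IH y F by fastforce
      next
        case False
        define c where "c = a + real m * h"
        have c: "a \<le> c" "c < y" "y - c \<le> h" using False y h by (auto simp: c_def algebra_simps)
        have FL: "fam a c n (splitL c I)" and FR: "fam c y n (splitR c I)" using split_fam[OF F c(1)] c(2) by auto
        have "c \<le> b" "c \<le> a + real m * h" using c y by (auto simp: c_def)
        then have "vsum f n (splitL c I) \<le> real m" using Suc.IH c(1) FL by blast
        moreover have "vsum f n (splitR c I) < 1"
        proof (rule \<delta>(2))
          show "fam a b n (splitR c I)" using fam_mono[OF FR c(1) y(2)] .
          have "lsum n (splitR c I) \<le> y - c" using lsum_le[OF FR] c by simp
          then show "lsum n (splitR c I) < \<delta>" using c h by linarith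
        qed
        moreover have "vsum f n I \<le> vsum f n (splitL c I) + vsum f n (splitR c I)" by (rule split_vsum[OF F])
        ultimately show ?thesis by simp
      qed
    qed
  qed
  obtain m :: nat where m: "(b - a) / h \<le> real m" using real_arch_simple by blast
  then have "b \<le> a + real m * h" using h by (simp add: field_simps)
  then show ?thesis using claim[of m] ab by blast
qed

definition var :: "(real \<Rightarrow> 'a::real_normed_vector) \<Rightarrow> real \<Rightarrow> real \<Rightarrow> real" where
  "var f a x = Sup {vsum f n I | n I. fam a x n I}"

locale acfun =
  fixes f :: "real \<Rightarrow> 'a::real_normed_vector" and a b :: real
  assumes ac: "abs_cont_on a b f" and ab: "a \<le> b"
begin

lemma bv: obtains B where "\<And>n I. fam a b n I \<Longrightarrow> vsum f n I \<le> B"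
  using ac_bv[OF ac ab] by blast

lemma var_bdd: "x \<le> b \<Longrightarrow> bdd_above {vsum f n I | n I. fam a x n I}"
proof -
  assume x: "x \<le> b"
  obtain B where B: "\<And>n I. fam a b n I \<Longrightarrow> vsum f n I \<le> B" using bv by blast
  show ?thesis by (rule bdd_aboveI[of _ B]) (use B fam_mono x in blast)
qed

lemma var_ne: "{vsum f n I | n I. fam a x n I} \<noteq> {}"
proof -
  have "fam a x 0 I" for I by (simp add: fam_def)
  then show ?thesis by blast
qed

lemma var_ge: "fam a x n I \<Longrightarrow> x \<le> b \<Longrightarrow> vsum f n I \<le> var f a x"
  unfolding var_def by (rule cSup_upper) (auto intro: var_bdd)

lemma var_le: "(\<And>n I. fam a x n I \<Longrightarrow> vsum f n I \<le> M) \<Longrightarrow> var f a x \<le> M"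
  unfolding var_def using var_ne by (intro cSup_least) auto

lemma var_nonneg: "x \<le> b \<Longrightarrow> 0 \<le> var f a x"
proof -
  assume "x \<le> b"
  have "fam a x 0 (\<lambda>_. (0, 0))" by (simp add: fam_def)
  then have "vsum f 0 (\<lambda>_. (0, 0)) \<le> var f a x" using var_ge \<open>x \<le> b\<close> by blast
  then show ?thesis by (simp add: vsum_def)
qed

lemma var_add:
  assumes "a \<le> x" "x \<le> y" "y \<le> b"
  shows "var f a x + norm (f y - f x) \<le> var f a y"
proof -
  have "vsum f n I \<le> var f a y - norm (f y - f x)" if F: "fam a x n I" for n I
  proof -
    define I' where "I' = I(n := (x, y))"
    have "fam a y (Suc n) I'"
      unfolding fam_def
    proof (rule conjI; intro allI impI)
      fix k assume "k < Suc n"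
      then show "a \<le> fst (I' k) \<and> fst (I' k) \<le> snd (I' k) \<and> snd (I' k) \<le> y"
        using F assms by (cases "k = n") (auto simp: I'_def fam_def less_Suc_eq)
    next
      fix j k assume jk: "j < Suc n" "k < Suc n" "j \<noteq> k"
      show "{fst (I' j)<..<snd (I' j)} \<inter> {fst (I' k)<..<snd (I' k)} = {}"
      proof (cases "j = n")
        case True
        then have "k < n" using jk by auto
        then have "snd (I k) \<le> x" using F by (auto simp: fam_def)
        then show ?thesis using True jk by (auto simp: I'_def)
      next
        case False
        then have j: "j < n" using jk by auto
        show ?thesis
        proof (cases "k = n")
          case True
          have "snd (I j) \<le> x" using F j by (auto simp: fam_def)
          then show ?thesis using True jk by (auto simp: I'_def)
        next
          case False
          then have "k < n" using jk by auto
          then show ?thesis using F j jk False \<open>j \<noteq> n\<close> by (auto simp: I'_def fam_def)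
        qed
      qed
    qed
    then have "vsum f (Suc n) I' \<le> var f a y" using var_ge assms by blast
    moreover have "vsum f (Suc n) I' = vsum f n I + norm (f y - f x)"
      unfolding vsum_def I'_def by simp
    ultimately show ?thesis by simp
  qed
  then have "var f a x \<le> var f a y - norm (f y - f x)" by (rule var_le)
  then show ?thesis by simp
qed

lemma var_mono: "a \<le> x \<Longrightarrow> x \<le> y \<Longrightarrow> y \<le> b \<Longrightarrow> var f a x \<le> var f a y"
  using var_add[of x y] by (smt (verit) norm_ge_zero)

lemma var_unif:
  assumes e: "e > 0"
  obtains d where "d > 0" "\<And>x y. a \<le> x \<Longrightarrow> x \<le> y \<Longrightarrow> y \<le> b \<Longrightarrow> y - x < d \<Longrightarrow> var f a y \<le> var f a x + e"
proof -
  obtain \<delta> where \<delta>: "\<delta> > 0" "\<And>n I. fam a b n I \<Longrightarrow> lsum n I < \<delta> \<Longrightarrow> vsum f n I < e"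
    using ac e unfolding abs_cont_on_fam by meson
  have "var f a y \<le> var f a x + e" if xy: "a \<le> x" "x \<le> y" "y \<le> b" "y - x < \<delta>" for x y
  proof (rule var_le)
    fix n I assume F: "fam a y n I"
    have FL: "fam a x n (splitL x I)" and FR: "fam x y n (splitR x I)" using split_fam[OF F xy(1,2)] by auto
    have "vsum f n (splitL x I) \<le> var f a x" using var_ge[OF FL] xy by simp
    moreover have "vsum f n (splitR x I) < e"
    proof (rule \<delta>(2))
      show "fam a b n (splitR x I)" using fam_mono[OF FR xy(1) xy(3)] .
      have "lsum n (splitR x I) \<le> y - x" using lsum_le[OF FR xy(2)] .
      then show "lsum n (splitR x I) < \<delta>" using xy by linarith
    qed
    moreover have "vsum f n I \<le> vsum f n (splitL x I) + vsum f n (splitR x I)" by (rule split_vsum[OF F])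
    ultimately show "vsum f n I \<le> var f a x + e" by simp
  qed
  then show ?thesis using that \<delta>(1) by blast
qed

lemma var_cont: "continuous_on {a..b} (var f a)"
  unfolding continuous_on_iff
proof (intro ballI allI impI)
  fix x e assume x: "x \<in> {a..b}" and e: "(0::real) < e"
  obtain d where d: "d > 0" "\<And>x y. a \<le> x \<Longrightarrow> x \<le> y \<Longrightarrow> y \<le> b \<Longrightarrow> y - x < d \<Longrightarrow> var f a y \<le> var f a x + e / 2"
    using var_unif[of "e/2"] e by auto
  show "\<exists>d>0. \<forall>x'\<in>{a..b}. dist x' x < d \<longrightarrow> dist (var f a x') (var f a x) < e"
  proof (intro exI[of _ d] conjI ballI impI)
    fix y assume y: "y \<in> {a..b}" "dist y x < d"
    show "dist (var f a y) (var f a x) < e"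
    proof (cases "x \<le> y")
      case True
      then have "var f a y \<le> var f a x + e / 2" "var f a x \<le> var f a y"
        using d(2)[of x y] var_mono[of x y] x y by (auto simp: dist_real_def)
      then show ?thesis using e by (simp add: dist_real_def)
    next
      case False
      then have "var f a x \<le> var f a y + e / 2" "var f a y \<le> var f a x"
        using d(2)[of y x] var_mono[of y x] x y by (auto simp: dist_real_def)
      then show ?thesis using e by (simp add: dist_real_def)
    qed
  qed (use d in auto)
qed

end

lemma shift_bound:
  fixes F :: "real \<Rightarrow> real"
  assumes mono: "mono F" and cont: "continuous_on UNIV F" and h: "0 < h" "h \<le> b - a" "h \<le> 1"
  shows "integral {a..b} (\<lambda>x. (F (x + h) - F x) / h) \<le> F (b + 1) - F a"
proof -
  have ci: "F integrable_on {u..v}" for u v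
    using cont by (intro integrable_continuous_real) (auto intro: continuous_on_subset)
  have ci2: "(\<lambda>x. F (x + h)) integrable_on {u..v}" for u v
    using cont by (intro integrable_continuous_real continuous_on_compose2[OF cont]) (auto intro!: continuous_intros)
  have i1: "integral {a..b} (\<lambda>x. F (x + h)) = integral {a + h..b + h} F"
    using integral_shift_real_ivl[of "a + h" h "b + h" F] by simp
  have i2: "integral {a + h..b} F + integral {b..b + h} F = integral {a + h..b + h} F"
    using h by (intro Henstock_Kurzweil_Integration.integral_combine ci) auto
  have i3: "integral {a..a + h} F + integral {a + h..b} F = integral {a..b} F"
    using h by (intro Henstock_Kurzweil_Integration.integral_combine ci) auto
  have b1: "integral {b..b + h} F \<le> integral {b..b + h} (\<lambda>_. F (b + h))"
    using mono by (intro integral_le ci) (auto simp: monoD)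
  have b1': "integral {b..b + h} (\<lambda>_. F (b + h)) = h * F (b + h)" using h by simp
  have b2: "integral {a..a + h} (\<lambda>_. F a) \<le> integral {a..a + h} F"
    using mono by (intro integral_le ci) (auto simp: monoD)
  have b2': "integral {a..a + h} (\<lambda>_. F a) = h * F a" using h by simp
  have eq: "(\<lambda>x. (F (x + h) - F x) / h) = (\<lambda>x. (1 / h) * (F (x + h) - F x))" by auto
  have "integral {a..b} (\<lambda>x. (F (x + h) - F x) / h) = (1 / h) * (integral {a..b} (\<lambda>x. F (x + h)) - integral {a..b} F)"
    unfolding eq by (simp add: integral_diff ci ci2)
  also have "\<dots> \<le> (1 / h) * (h * F (b + h) - h * F a)"
    using i1 i2 i3 b1 b1' b2 b2' h by (intro mult_left_mono) auto
  also have "\<dots> = F (b + h) - F a" using h by (simp add: field_simps)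
  also have "\<dots> \<le> F (b + 1) - F a" using mono h by (simp add: monoD)
  finally show ?thesis .
qed

theorem mono_deriv_int:
  fixes F :: "real \<Rightarrow> real"
  assumes mono: "mono F" and cont: "continuous_on UNIV F" and ab: "a < b"
  shows "(\<lambda>x. vector_derivative F (at x)) absolutely_integrable_on {a..b}"
proof -
  define N where "N = {x. \<not> F differentiable (at x)}"
  have negN: "negligible N" unfolding N_def by (rule mono_diff_ae[OF mono cont])
  define S where "S = {a..b} - N"
  have Sl: "S \<in> sets lebesgue" unfolding S_def using negligible_imp_sets[OF negN] by (intro sets.Diff) auto
  have Slm: "S \<in> lmeasurable" using Sl by (intro bounded_set_imp_lmeasurable) (auto simp: S_def intro: bounded_subset[of "{a..b}"])
  define e where "e m = inverse (real (Suc m))" for m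
  have e0: "e m > 0" for m by (simp add: e_def)
  have elim: "e \<longlonglongrightarrow> 0" unfolding e_def by (rule LIMSEQ_inverse_real_of_nat)
  define g where "g m x = (F (x + e m) - F x) / e m" for m x
  define D where "D x = vector_derivative F (at x)" for x
  have gnn: "0 \<le> g m x" for m x using e0[of m] mono by (simp add: g_def monoD)
  have gcont: "continuous_on UNIV (g m)" for m
  proof -
    have c1: "continuous_on UNIV (\<lambda>x. F (x + e m))"
      by (rule continuous_on_compose2[OF cont]) (auto intro!: continuous_intros)
    have "e m \<noteq> 0" using e0[of m] by simp
    then show ?thesis unfolding g_def by (intro continuous_on_divide continuous_on_diff c1 cont continuous_on_const) auto
  qed
  have conv: "(\<lambda>m. g m x) \<longlonglongrightarrow> D x" if "x \<notin> N" for x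
  proof -
    have "(F has_vector_derivative D x) (at x)" using that vector_derivative_works by (auto simp: N_def D_def)
    then have "(F has_real_derivative D x) (at x)" by (simp add: has_real_derivative_iff_has_vector_derivative)
    then have "(\<lambda>h. (F (x + h) - F x) / h) \<midarrow>0\<rightarrow> D x" by (simp add: DERIV_def)
    then have "\<forall>S. (\<forall>n. S n \<noteq> 0) \<and> S \<longlonglongrightarrow> 0 \<longrightarrow> (\<lambda>n. (F (x + S n) - F x) / S n) \<longlonglongrightarrow> D x"
      by (rule LIMSEQ_SEQ_conv[THEN iffD2])
    moreover have "\<forall>n. e n \<noteq> 0" using e0 by (simp add: less_imp_neq[symmetric])
    ultimately show ?thesis unfolding g_def using elim by blast
  qed
  have Dnn: "0 \<le> D x" if "x \<notin> N" for x
    using conv[OF that] gnn by (meson LIMSEQ_le_const)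
  have gint: "g m integrable_on {a..b}" for m
    using gcont by (intro integrable_continuous_real) (auto intro: continuous_on_subset)
  have gS: "g m integrable_on S \<and> integral S (g m) = integral {a..b} (g m)" for m
  proof
    have n1: "negligible {x \<in> {a..b} - S. g m x \<noteq> 0}" by (rule negligible_subset[OF negN]) (auto simp: S_def)
    have "{x \<in> S - {a..b}. g m x \<noteq> 0} = {}" by (auto simp: S_def)
    then have n2: "negligible {x \<in> S - {a..b}. g m x \<noteq> 0}" by (metis negligible_empty)
    show "g m integrable_on S" by (rule integrable_spike_set[OF gint n1 n2])
    show "integral S (g m) = integral {a..b} (g m)" by (rule integral_spike_set[OF n2 n1])
  qed
  define C where "C = F (b + 1) - F a"
  have gbound: "\<forall>\<^sub>F m in sequentially. integral S (g m) \<le> C"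
  proof -
    have "min (b - a) 1 > 0" using ab by simp
    then have "\<forall>\<^sub>F m in sequentially. e m < min (b - a) 1" using elim unfolding order_tendsto_iff by blast
    then show ?thesis
    proof (rule eventually_mono)
      fix m assume "e m < min (b - a) 1"
      then have "integral {a..b} (g m) \<le> C" unfolding g_def C_def
        by (intro shift_bound[OF mono cont e0[of m]]) auto
      then show "integral S (g m) \<le> C" using gS[of m] by simp
    qed
  qed
  define \<phi> where "\<phi> k x = min (D x) (real k)" for k x
  have \<phi>int: "\<phi> k integrable_on S \<and> integral S (\<phi> k) \<le> C" for k
  proof -
    define \<psi> where "\<psi> m x = min (g m x) (real k)" for m x
    have \<psi>meas: "\<psi> m \<in> borel_measurable (lebesgue_on S)" for m
      unfolding \<psi>_def using gcont[of m] Sl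
      by (intro continuous_imp_measurable_on_sets_lebesgue continuous_intros) (auto intro: continuous_on_subset)
    have kint: "(\<lambda>x. real k) integrable_on S" using Slm by (rule integrable_on_const)
    have \<psi>b: "norm (\<psi> m x) \<le> real k" for m x using gnn[of m x] by (simp add: \<psi>_def)
    have \<psi>int: "\<psi> m integrable_on S" for m
      by (rule measurable_bounded_by_integrable_imp_integrable[OF \<psi>meas kint _ Sl]) (use \<psi>b in auto)
    have \<psi>conv: "(\<lambda>m. \<psi> m x) \<longlonglongrightarrow> \<phi> k x" if "x \<in> S" for x
      unfolding \<psi>_def \<phi>_def using conv that by (intro tendsto_min tendsto_const) (auto simp: S_def)
    have dc: "\<phi> k integrable_on S" "(\<lambda>m. integral S (\<psi> m)) \<longlonglongrightarrow> integral S (\<phi> k)"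
      using dominated_convergence[OF \<psi>int kint _ \<psi>conv] \<psi>b by auto
    have "\<forall>\<^sub>F m in sequentially. integral S (\<psi> m) \<le> C"
      using gbound
    proof (rule eventually_mono)
      fix m assume "integral S (g m) \<le> C"
      moreover have "integral S (\<psi> m) \<le> integral S (g m)"
        using \<psi>int gS by (intro integral_le) (auto simp: \<psi>_def)
      ultimately show "integral S (\<psi> m) \<le> C" by simp
    qed
    then have "integral S (\<phi> k) \<le> C" using dc(2) by (intro tendsto_upperbound) auto
    then show ?thesis using dc(1) by simp
  qed
  have \<phi>nn: "0 \<le> integral S (\<phi> k)" for k
    using \<phi>int Dnn by (intro integral_nonneg) (auto simp: \<phi>_def S_def)
  have mc: "D integrable_on S"
  proof -
    have "D integrable_on S \<and> (\<lambda>k. integral S (\<phi> k)) \<longlonglongrightarrow> integral S D"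
    proof (rule monotone_convergence_increasing)
      show "\<phi> k integrable_on S" for k using \<phi>int by blast
      show "\<phi> k x \<le> \<phi> (Suc k) x" if "x \<in> S" for k x by (auto simp: \<phi>_def)
      show "(\<lambda>k. \<phi> k x) \<longlonglongrightarrow> D x" if "x \<in> S" for x
      proof (rule tendsto_eventually)
        obtain K :: nat where "D x \<le> real K" using real_arch_simple by blast
        then show "\<forall>\<^sub>F k in sequentially. \<phi> k x = D x"
          unfolding eventually_sequentially \<phi>_def by (intro exI[of _ K]) auto
      qed
      show "bounded (range (\<lambda>k. integral S (\<phi> k)))"
        unfolding bounded_real using \<phi>int \<phi>nn by (intro exI[of _ C]) auto
    qed
    then show ?thesis by blast
  qed
  have "D absolutely_integrable_on S"
    using mc Dnn by (intro nonnegative_absolutely_integrable_1) (auto simp: S_def)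
  moreover have "{x \<in> S - {a..b}. D x \<noteq> 0} = {}" by (auto simp: S_def)
  then have "negligible {x \<in> S - {a..b}. D x \<noteq> 0}" by (metis negligible_empty)
  moreover have "negligible {x \<in> {a..b} - S. D x \<noteq> 0}" by (rule negligible_subset[OF negN]) (auto simp: S_def)
  ultimately show ?thesis unfolding D_def by (rule absolutely_integrable_spike_set)
qed

lemma ac_cont:
  fixes f :: "real \<Rightarrow> 'a::real_normed_vector"
  assumes ac: "abs_cont_on a b f"
  shows "continuous_on {a..b} f"
  unfolding continuous_on_iff
proof (intro ballI allI impI)
  fix x e assume x: "x \<in> {a..b}" and e: "(0::real) < e"
  obtain \<delta> where \<delta>: "\<delta> > 0" "\<And>n I. fam a b n I \<Longrightarrow> lsum n I < \<delta> \<Longrightarrow> vsum f n I < e"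
    using ac e unfolding abs_cont_on_fam by meson
  show "\<exists>d>0. \<forall>x'\<in>{a..b}. dist x' x < d \<longrightarrow> dist (f x') (f x) < e"
  proof (intro exI[of _ \<delta>] conjI ballI impI)
    fix y assume y: "y \<in> {a..b}" "dist y x < \<delta>"
    define I where "I = (\<lambda>_::nat. (min x y, max x y))"
    have "fam a b 1 I" using x y by (auto simp: fam_def I_def)
    moreover have "lsum 1 I < \<delta>" using y by (auto simp: lsum_def I_def dist_real_def)
    ultimately have "vsum f 1 I < e" by (rule \<delta>(2))
    moreover have "vsum f 1 I = dist (f y) (f x)"
      by (cases "x \<le> y") (auto simp: vsum_def I_def dist_norm norm_minus_commute max_def min_def)
    ultimately show "dist (f y) (f x) < e" by simp
  qed (use \<delta> in auto)
qed

definition clamp :: "real \<Rightarrow> real \<Rightarrow> real \<Rightarrow> real" where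
  "clamp a b x = max a (min b x)"

lemma clamp_in: "a \<le> b \<Longrightarrow> clamp a b x \<in> {a..b}" by (auto simp: clamp_def)
lemma clamp_mono: "a \<le> b \<Longrightarrow> x \<le> y \<Longrightarrow> clamp a b x \<le> clamp a b y" by (auto simp: clamp_def)
lemma clamp_id: "x \<in> {a..b} \<Longrightarrow> clamp a b x = x" by (auto simp: clamp_def)
lemma clamp_cont: "continuous_on UNIV (clamp a b)" unfolding clamp_def by (intro continuous_intros)

theorem ac_real_decomp:
  fixes f :: "real \<Rightarrow> real"
  assumes ac: "abs_cont_on a b f" and ab: "a \<le> b"
  shows "\<exists>F1 F2. mono F1 \<and> continuous_on UNIV F1 \<and> mono F2 \<and> continuous_on UNIV F2 \<and>
           (\<forall>x\<in>{a..b}. f x = F1 x - F2 x)"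
proof -
  interpret acfun f a b using ac ab by unfold_locales
  define F1 where "F1 x = var f a (clamp a b x)" for x
  define F2 where "F2 x = var f a (clamp a b x) - f (clamp a b x)" for x
  have m1: "mono F1"
  proof (rule monoI)
    fix x y :: real assume "x \<le> y"
    then show "F1 x \<le> F1 y" unfolding F1_def
      using clamp_in[OF ab] clamp_mono[OF ab] by (intro var_mono) auto
  qed
  have m2: "mono F2"
  proof (rule monoI)
    fix x y :: real assume "x \<le> y"
    then have "var f a (clamp a b x) + norm (f (clamp a b y) - f (clamp a b x)) \<le> var f a (clamp a b y)"
      using clamp_in[OF ab] clamp_mono[OF ab] by (intro var_add) auto
    then show "F2 x \<le> F2 y" unfolding F2_def by (simp add: abs_le_iff)
  qed
  have cv: "continuous_on UNIV (\<lambda>x. var f a (clamp a b x))"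
    by (rule continuous_on_compose2[OF var_cont clamp_cont]) (use clamp_in[OF ab] in auto)
  have cf: "continuous_on UNIV (\<lambda>x. f (clamp a b x))"
    by (rule continuous_on_compose2[OF ac_cont[OF ac] clamp_cont]) (use clamp_in[OF ab] in auto)
  have c1: "continuous_on UNIV F1" unfolding F1_def by (rule cv)
  have c2: "continuous_on UNIV F2" unfolding F2_def by (intro continuous_on_diff cv cf)
  have "\<forall>x\<in>{a..b}. f x = F1 x - F2 x" by (auto simp: F1_def F2_def clamp_id)
  then show ?thesis using m1 m2 c1 c2 by blast
qed

theorem ac_real_ae:
  fixes f :: "real \<Rightarrow> real"
  assumes ac: "abs_cont_on a b f" and ab: "a < b"
  shows "\<exists>N. negligible N \<and> (\<forall>x\<in>{a..b} - N. (f has_real_derivative vector_derivative f (at x)) (at x)) \<and>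
           (\<lambda>x. vector_derivative f (at x)) absolutely_integrable_on {a..b}"
proof -
  obtain F1 F2 where F: "mono F1" "continuous_on UNIV F1" "mono F2" "continuous_on UNIV F2"
      "\<And>x. x \<in> {a..b} \<Longrightarrow> f x = F1 x - F2 x"
    using ac_real_decomp[OF ac] ab by force
  define N where "N = {a, b} \<union> {x. \<not> F1 differentiable (at x)} \<union> {x. \<not> F2 differentiable (at x)}"
  have negN: "negligible N" unfolding N_def
    using mono_diff_ae[OF F(1,2)] mono_diff_ae[OF F(3,4)] by (intro negligible_Un) auto
  define D where "D x = vector_derivative F1 (at x) - vector_derivative F2 (at x)" for x
  have der: "(f has_real_derivative D x) (at x)" if x: "x \<in> {a..b} - N" for x
  proof -
    have d1: "(F1 has_real_derivative vector_derivative F1 (at x)) (at x)"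
      using x vector_derivative_works[of F1 "at x"] by (auto simp: N_def has_real_derivative_iff_has_vector_derivative)
    have d2: "(F2 has_real_derivative vector_derivative F2 (at x)) (at x)"
      using x vector_derivative_works[of F2 "at x"] by (auto simp: N_def has_real_derivative_iff_has_vector_derivative)
    have "((\<lambda>t. F1 t - F2 t) has_real_derivative D x) (at x)" unfolding D_def by (intro derivative_intros d1 d2)
    then have "((\<lambda>t. F1 t - F2 t) has_derivative (*) (D x)) (at x)"
      by (simp add: has_field_derivative_def)
    then have "(f has_derivative (*) (D x)) (at x)"
    proof (rule has_derivative_transform_within_open)
      show "open {a<..<b}" by simp
      show "x \<in> {a<..<b}" using x by (auto simp: N_def)
      show "\<And>y. y \<in> {a<..<b} \<Longrightarrow> F1 y - F2 y = f y" using F(5) by auto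
    qed
    then show ?thesis by (simp add: has_field_derivative_def)
  qed
  have vd: "vector_derivative f (at x) = D x" if "x \<in> {a..b} - N" for x
    using der[OF that] by (simp add: has_real_derivative_iff_has_vector_derivative vector_derivative_at)
  have "D absolutely_integrable_on {a..b}"
    unfolding D_def using mono_deriv_int[OF F(1,2) ab] mono_deriv_int[OF F(3,4) ab] by (rule set_integral_diff(1))
  then have "(\<lambda>x. vector_derivative f (at x)) absolutely_integrable_on {a..b}"
    by (rule absolutely_integrable_spike[OF _ negN]) (use vd in auto)
  then show ?thesis using der vd negN by metis
qed

lemma ac_Re_Im:
  fixes f :: "real \<Rightarrow> complex"
  assumes ac: "abs_cont_on a b f"
  shows "abs_cont_on a b (\<lambda>t. Re (f t))" "abs_cont_on a b (\<lambda>t. Im (f t))"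
proof -
  have le1: "vsum (\<lambda>t. Re (f t)) n I \<le> vsum f n I" for n I
    unfolding vsum_def by (intro sum_mono) (metis minus_complex.simps(1) abs_Re_le_cmod real_norm_def)
  have le2: "vsum (\<lambda>t. Im (f t)) n I \<le> vsum f n I" for n I
    unfolding vsum_def by (intro sum_mono) (metis minus_complex.simps(2) abs_Im_le_cmod real_norm_def)
  show "abs_cont_on a b (\<lambda>t. Re (f t))" using ac le1 unfolding abs_cont_on_fam by (meson le_less_trans)
  show "abs_cont_on a b (\<lambda>t. Im (f t))" using ac le2 unfolding abs_cont_on_fam by (meson le_less_trans)
qed

theorem ac_complex_ae:
  fixes f :: "real \<Rightarrow> complex"
  assumes ac: "abs_cont_on a b f" and ab: "a < b"
  shows "\<exists>N. negligible N \<and> (\<forall>x\<in>{a..b} - N. (f has_vector_derivative vector_derivative f (at x)) (at x)) \<and>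
           (\<lambda>x. vector_derivative f (at x)) absolutely_integrable_on {a..b}"
proof -
  obtain N1 where N1: "negligible N1" "\<And>x. x \<in> {a..b} - N1 \<Longrightarrow> ((\<lambda>t. Re (f t)) has_real_derivative vector_derivative (\<lambda>t. Re (f t)) (at x)) (at x)"
    "(\<lambda>x. vector_derivative (\<lambda>t. Re (f t)) (at x)) absolutely_integrable_on {a..b}"
    using ac_real_ae[OF ac_Re_Im(1)[OF ac] ab] by blast
  obtain N2 where N2: "negligible N2" "\<And>x. x \<in> {a..b} - N2 \<Longrightarrow> ((\<lambda>t. Im (f t)) has_real_derivative vector_derivative (\<lambda>t. Im (f t)) (at x)) (at x)"
    "(\<lambda>x. vector_derivative (\<lambda>t. Im (f t)) (at x)) absolutely_integrable_on {a..b}"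
    using ac_real_ae[OF ac_Re_Im(2)[OF ac] ab] by blast
  define U where "U x = vector_derivative (\<lambda>t. Re (f t)) (at x)" for x
  define V where "V x = vector_derivative (\<lambda>t. Im (f t)) (at x)" for x
  define N where "N = N1 \<union> N2"
  have negN: "negligible N" using N1(1) N2(1) by (simp add: N_def)
  have der: "(f has_vector_derivative Complex (U x) (V x)) (at x)" if x: "x \<in> {a..b} - N" for x
    unfolding has_vector_derivative_complex_iff using N1(2)[of x] N2(2)[of x] x by (simp add: N_def U_def V_def)
  have vd: "vector_derivative f (at x) = Complex (U x) (V x)" if "x \<in> {a..b} - N" for x
    using der[OF that] by (rule vector_derivative_at)
  have eqf: "(\<lambda>x. Complex (U x) (V x)) = (\<lambda>x. U x *\<^sub>R 1 + V x *\<^sub>R \<i>)"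
    by (auto simp: complex_eq_iff)
  have "(\<lambda>x. Complex (U x) (V x)) absolutely_integrable_on {a..b}"
    unfolding eqf using N1(3) N2(3) unfolding U_def V_def
    by (intro set_integral_add(1) absolutely_integrable_scaleR_right)
  then have "(\<lambda>x. vector_derivative f (at x)) absolutely_integrable_on {a..b}"
    by (rule absolutely_integrable_spike[OF _ negN]) (use vd in auto)
  then show ?thesis using der vd negN by metis
qed

locale absnorm =
  fixes N :: "complex ^ 'n \<Rightarrow> real"
  assumes norm_zero: "\<And>x. N x = 0 \<longleftrightarrow> x = 0"
    and norm_hom: "\<And>c x. N (c *s x) = cmod c * N x"
    and norm_tri: "\<And>x y. N (x + y) \<le> N x + N y"
    and norm_l1: "\<And>x. N x \<le> (\<Sum>i\<in>UNIV. cmod (x $ i))"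
    and norm_abs: "\<And>x. N x = N (\<chi> i. complex_of_real (cmod (x $ i)))"
begin

lemma N_neg: "N (- x) = N x"
  using norm_hom[of "-1" x] by (simp add: vector_smult_lneg)

lemma N_nonneg: "0 \<le> N x"
proof -
  have "N (x + - x) \<le> N x + N (- x)" by (rule norm_tri)
  moreover have "N 0 = 0" using norm_zero by simp
  ultimately have "0 \<le> N x + N x" using N_neg by simp
  then show ?thesis by simp
qed

lemma N_diff: "N x - N y \<le> N (x - y)"
  using norm_tri[of "x - y" y] by simp

lemma N_abs_diff: "\<bar>N x - N y\<bar> \<le> (\<Sum>i\<in>UNIV. cmod (x $ i - y $ i))"
proof -
  have "N x - N y \<le> (\<Sum>i\<in>UNIV. cmod (x $ i - y $ i))" using N_diff[of x y] norm_l1[of "x - y"] by simp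
  moreover have "N y - N x \<le> (\<Sum>i\<in>UNIV. cmod (x $ i - y $ i))"
    using N_diff[of y x] norm_l1[of "y - x"] by (simp add: norm_minus_commute)
  ultimately show ?thesis by linarith
qed

lemma N_sum_le: "finite A \<Longrightarrow> N (\<Sum>a\<in>A. w a) \<le> (\<Sum>a\<in>A. N (w a))"
proof (induction A rule: finite_induct)
  case empty then show ?case using norm_zero[of 0] by simp
next
  case (insert x F)
  then show ?case using norm_tri[of "w x" "sum w F"] by simp
qed

lemma scaleR_as_smult: "c *\<^sub>R (x :: complex ^ 'n) = complex_of_real c *s x"
  unfolding vec_eq_iff
proof (rule allI)
  fix i
  have "(c *\<^sub>R x) $ i = c *\<^sub>R (x $ i)" by simp
  also have "\<dots> = complex_of_real c * x $ i" by (simp add: scaleR_conv_of_real)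
  finally show "(c *\<^sub>R x) $ i = (complex_of_real c *s x) $ i" by simp
qed

lemma N_scaleR: "N (c *\<^sub>R x) = \<bar>c\<bar> * N x"
  by (simp add: scaleR_as_smult norm_hom)

lemma N_le_norm: "N x \<le> real CARD('n) * norm x"
proof -
  have "N x \<le> (\<Sum>i\<in>UNIV. cmod (x $ i))" by (rule norm_l1)
  also have "\<dots> \<le> (\<Sum>i\<in>(UNIV::'n set). norm x)" by (intro sum_mono) (simp add: Finite_Cartesian_Product.norm_nth_le)
  also have "\<dots> = real CARD('n) * norm x" by simp
  finally show ?thesis .
qed

lemma N_coord: "cmod (x $ i) * N (axis i 1) \<le> N x"
proof -
  define y where "y = (\<chi> j. if j = i then x $ j else - (x $ j))"
  have "(\<chi> j. complex_of_real (cmod (y $ j))) = (\<chi> j. complex_of_real (cmod (x $ j)))"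
    by (simp add: vec_eq_iff y_def)
  then have Ny: "N y = N x" using norm_abs[of y] norm_abs[of x] by simp
  have "x + y = (2 * x $ i) *s axis i 1"
    by (simp add: vec_eq_iff y_def axis_def)
  then have "N (x + y) = 2 * cmod (x $ i) * N (axis i 1)" using norm_hom by (simp add: norm_mult)
  moreover have "N (x + y) \<le> N x + N y" by (rule norm_tri)
  ultimately show ?thesis using Ny by simp
qed

lemma N_axis_pos: "N (axis i 1) > 0"
proof -
  have "axis i (1::complex) \<noteq> 0" by (simp add: axis_eq_0_iff)
  then show ?thesis using norm_zero[of "axis i 1"] N_nonneg[of "axis i 1"] by linarith
qed

lemma jensen:
  fixes v :: "real \<Rightarrow> complex ^ 'n"
  assumes v: "v integrable_on {a..b}" and nv: "(\<lambda>t. N (v t)) integrable_on {a..b}"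
  shows "N (integral {a..b} v) \<le> integral {a..b} (\<lambda>t. N (v t))"
proof (rule field_le_epsilon)
  fix e :: real assume e: "e > 0"
  define B where "B = real CARD('n)"
  have B0: "B \<ge> 0" by (simp add: B_def)
  define e1 where "e1 = e / (2 * (B + 1))"
  have e1: "e1 > 0" "B * e1 \<le> e / 2" using e B0 by (auto simp: e1_def field_simps)
  have ab: "{a..b} = cbox a b" by simp
  obtain \<gamma> where \<gamma>: "gauge \<gamma>"
      "\<And>\<D>. \<D> tagged_division_of cbox a b \<and> \<gamma> fine \<D> \<Longrightarrow> norm ((\<Sum>(x, k)\<in>\<D>. Henstock_Kurzweil_Integration.content k *\<^sub>R v x) - integral (cbox a b) v) < e1"
    using integrable_integral[OF v[unfolded ab], unfolded has_integral[of v]] e1(1) by meson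
  obtain \<delta> where \<delta>: "gauge \<delta>"
      "\<And>\<D>. \<D> tagged_division_of cbox a b \<and> \<delta> fine \<D> \<Longrightarrow> norm ((\<Sum>(x, k)\<in>\<D>. Henstock_Kurzweil_Integration.content k *\<^sub>R N (v x)) - integral (cbox a b) (\<lambda>t. N (v t))) < e / 2"
    using integrable_integral[OF nv[unfolded ab], unfolded has_integral[of "\<lambda>t. N (v t)"]] e by (meson half_gt_zero)
  have "gauge (\<lambda>x. \<gamma> x \<inter> \<delta> x)" using \<gamma>(1) \<delta>(1) gauge_Int by blast
  then obtain \<D> where D: "\<D> tagged_division_of cbox a b" "(\<lambda>x. \<gamma> x \<inter> \<delta> x) fine \<D>"
    using fine_division_exists by metis
  have "\<gamma> fine \<D>" "\<delta> fine \<D>" using fine_Int D(2) by blast+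
  define Sv where "Sv = (\<Sum>(x, k)\<in>\<D>. Henstock_Kurzweil_Integration.content k *\<^sub>R v x)"
  define SN where "SN = (\<Sum>(x, k)\<in>\<D>. Henstock_Kurzweil_Integration.content k *\<^sub>R N (v x))"
  have fin: "finite \<D>" using D(1) by blast
  have "N Sv \<le> (\<Sum>p\<in>\<D>. N ((\<lambda>(x, k). Henstock_Kurzweil_Integration.content k *\<^sub>R v x) p))"
    unfolding Sv_def by (rule N_sum_le[OF fin])
  also have "\<dots> = SN" unfolding SN_def
    by (intro sum.cong) (auto simp: N_scaleR split_def)
  finally have NS: "N Sv \<le> SN" .
  have d1: "norm (Sv - integral {a..b} v) < e1" using \<gamma>(2)[of \<D>] D(1) \<open>\<gamma> fine \<D>\<close> by (simp add: Sv_def)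
  have d2: "\<bar>SN - integral {a..b} (\<lambda>t. N (v t))\<bar> < e / 2" using \<delta>(2)[of \<D>] D(1) \<open>\<delta> fine \<D>\<close> by (simp add: SN_def)
  have "N (integral {a..b} v) \<le> N Sv + N (integral {a..b} v - Sv)" using norm_tri[of Sv "integral {a..b} v - Sv"] by simp
  also have "N (integral {a..b} v - Sv) \<le> B * norm (integral {a..b} v - Sv)" using N_le_norm by (simp add: B_def)
  also have "\<dots> \<le> B * e1" using d1 B0 by (intro mult_left_mono) (auto simp: norm_minus_commute)
  finally show "N (integral {a..b} v) \<le> integral {a..b} (\<lambda>t. N (v t)) + e"
    using NS d2 e1(2) by linarith
qed

end

lemma ac_finite_sum:
  assumes "finite A" "\<And>i. i \<in> A \<Longrightarrow> abs_cont_on a b (f i)"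
  shows "\<forall>\<epsilon>>0. \<exists>\<delta>>0. \<forall>n I. fam a b n I \<and> lsum n I < \<delta> \<longrightarrow> (\<Sum>i\<in>A. vsum (f i) n I) < \<epsilon>"
  using assms
proof (induction A rule: finite_induct)
  case empty
  then show ?case by (auto intro: exI[of _ 1])
next
  case (insert x F)
  show ?case
  proof (intro allI impI)
    fix \<epsilon> :: real assume e: "\<epsilon> > 0"
    then have e2: "\<epsilon> / 2 > 0" by simp
    obtain \<delta>1 where d1: "\<delta>1 > 0" "\<And>n I. fam a b n I \<Longrightarrow> lsum n I < \<delta>1 \<Longrightarrow> vsum (f x) n I < \<epsilon> / 2"
      using insert.prems[of x] e2 unfolding abs_cont_on_fam by blast
    obtain \<delta>2 where d2: "\<delta>2 > 0" "\<And>n I. fam a b n I \<Longrightarrow> lsum n I < \<delta>2 \<Longrightarrow> (\<Sum>i\<in>F. vsum (f i) n I) < \<epsilon> / 2"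
      using insert.IH insert.prems e2 by blast
    show "\<exists>\<delta>>0. \<forall>n I. fam a b n I \<and> lsum n I < \<delta> \<longrightarrow> (\<Sum>i\<in>insert x F. vsum (f i) n I) < \<epsilon>"
    proof (intro exI[of _ "min \<delta>1 \<delta>2"] conjI allI impI)
      fix n I assume "fam a b n I \<and> lsum n I < min \<delta>1 \<delta>2"
      then have "vsum (f x) n I < \<epsilon> / 2" "(\<Sum>i\<in>F. vsum (f i) n I) < \<epsilon> / 2" using d1 d2 by auto
      then show "(\<Sum>i\<in>insert x F. vsum (f i) n I) < \<epsilon>" using insert.hyps by simp
    qed (use d1 d2 in auto)
  qed
qed

context absnorm
begin

lemma ac_N_comp:
  fixes f :: "'n \<Rightarrow> real \<Rightarrow> complex"
  assumes ac: "\<And>i. abs_cont_on a b (f i)"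
  shows "abs_cont_on a b (\<lambda>t. N (\<chi> i. f i t))"
proof -
  have le: "vsum (\<lambda>t. N (\<chi> i. f i t)) n I \<le> (\<Sum>i\<in>UNIV. vsum (f i) n I)" for n I
  proof -
    have "vsum (\<lambda>t. N (\<chi> i. f i t)) n I \<le> (\<Sum>k<n. \<Sum>i\<in>UNIV. cmod (f i (snd (I k)) - f i (fst (I k))))"
      unfolding vsum_def real_norm_def
      using N_abs_diff[of "\<chi> i. f i (snd (I k))" "\<chi> i. f i (fst (I k))" for k] by (intro sum_mono) simp
    also have "\<dots> = (\<Sum>i\<in>UNIV. vsum (f i) n I)" unfolding vsum_def by (rule sum.swap)
    finally show ?thesis .
  qed
  show ?thesis
    unfolding abs_cont_on_fam
  proof (intro allI impI)
    fix \<epsilon> :: real assume "\<epsilon> > 0"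
    have A: "\<forall>\<epsilon>>0. \<exists>\<delta>>0. \<forall>n I. fam a b n I \<and> lsum n I < \<delta> \<longrightarrow> (\<Sum>i\<in>UNIV. vsum (f i) n I) < \<epsilon>"
      by (rule ac_finite_sum[of "UNIV :: 'n set" a b f]) (use ac in auto)
    obtain \<delta> where d: "\<delta> > 0" "\<And>n I. fam a b n I \<and> lsum n I < \<delta> \<Longrightarrow> (\<Sum>i\<in>UNIV. vsum (f i) n I) < \<epsilon>"
      using A \<open>\<epsilon> > 0\<close> by blast
    show "\<exists>\<delta>>0. \<forall>n I. fam a b n I \<and> lsum n I < \<delta> \<longrightarrow> vsum (\<lambda>t. N (\<chi> i. f i t)) n I < \<epsilon>"
    proof (intro exI[of _ \<delta>] conjI allI impI)
      fix n I assume "fam a b n I \<and> lsum n I < \<delta>"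
      then show "vsum (\<lambda>t. N (\<chi> i. f i t)) n I < \<epsilon>" using d(2) le[of n I] by (meson le_less_trans)
    qed (use d in auto)
  qed
qed

end

lemma quot_real:
  fixes g :: "real \<Rightarrow> real"
  assumes "(g has_real_derivative D) (at t)"
  shows "((\<lambda>h. \<bar>g (t + h) - g t\<bar> / \<bar>h\<bar>) \<longlongrightarrow> \<bar>D\<bar>) (at 0)"
proof -
  have "((\<lambda>h. (g (t + h) - g t) / h) \<longlongrightarrow> D) (at 0)" using assms by (simp add: DERIV_def)
  then have "((\<lambda>h. \<bar>(g (t + h) - g t) / h\<bar>) \<longlongrightarrow> \<bar>D\<bar>) (at 0)" by (rule tendsto_rabs)
  then show ?thesis by (simp add: abs_divide)
qed

lemma quot_complex:
  fixes f :: "real \<Rightarrow> complex"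
  assumes "(f has_vector_derivative D) (at t)"
  shows "((\<lambda>h. cmod (f (t + h) - f t) / \<bar>h\<bar>) \<longlongrightarrow> cmod D) (at 0)"
proof -
  have r: "((\<lambda>h. (Re (f (t + h)) - Re (f t)) / h) \<longlongrightarrow> Re D) (at 0)"
    using has_field_derivative_Re[OF assms] by (simp add: DERIV_def)
  have i: "((\<lambda>h. (Im (f (t + h)) - Im (f t)) / h) \<longlongrightarrow> Im D) (at 0)"
    using has_field_derivative_Im[OF assms] by (simp add: DERIV_def)
  have "((\<lambda>h. Complex ((Re (f (t + h)) - Re (f t)) / h) ((Im (f (t + h)) - Im (f t)) / h)) \<longlongrightarrow> Complex (Re D) (Im D)) (at 0)"
    by (rule tendsto_Complex[OF r i])
  then have "((\<lambda>h. cmod (Complex ((Re (f (t + h)) - Re (f t)) / h) ((Im (f (t + h)) - Im (f t)) / h))) \<longlongrightarrow> cmod D) (at 0)"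
    using tendsto_norm by fastforce
  moreover have "cmod (Complex ((Re (f (t + h)) - Re (f t)) / h) ((Im (f (t + h)) - Im (f t)) / h)) = cmod (f (t + h) - f t) / \<bar>h\<bar>" for h
  proof -
    have "Complex ((Re (f (t + h)) - Re (f t)) / h) ((Im (f (t + h)) - Im (f t)) / h) = (f (t + h) - f t) / complex_of_real h"
      by (simp add: complex_eq_iff Re_divide_of_real Im_divide_of_real)
    then show ?thesis by (simp add: norm_divide)
  qed
  ultimately show ?thesis by simp
qed

lemma deriv_bound:
  fixes g :: "real \<Rightarrow> real" and f :: "'i \<Rightarrow> real \<Rightarrow> complex"
  assumes fin: "finite A" and dg: "(g has_real_derivative Dg) (at t)"
    and df: "\<And>i. i \<in> A \<Longrightarrow> (f i has_vector_derivative Df i) (at t)"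
    and lip: "\<And>s. \<bar>g s - g t\<bar> \<le> (\<Sum>i\<in>A. cmod (f i s - f i t))"
  shows "\<bar>Dg\<bar> \<le> (\<Sum>i\<in>A. cmod (Df i))"
proof (rule tendsto_le[OF at_neq_bot])
  show "((\<lambda>h. \<bar>g (t + h) - g t\<bar> / \<bar>h\<bar>) \<longlongrightarrow> \<bar>Dg\<bar>) (at 0)" by (rule quot_real[OF dg])
  show "((\<lambda>h. \<Sum>i\<in>A. cmod (f i (t + h) - f i t) / \<bar>h\<bar>) \<longlongrightarrow> (\<Sum>i\<in>A. cmod (Df i))) (at 0)"
    by (intro tendsto_sum quot_complex df)
  show "\<forall>\<^sub>F h in at 0. \<bar>g (t + h) - g t\<bar> / \<bar>h\<bar> \<le> (\<Sum>i\<in>A. cmod (f i (t + h) - f i t) / \<bar>h\<bar>)"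
  proof (rule always_eventually, rule allI)
    fix h :: real
    have "\<bar>g (t + h) - g t\<bar> / \<bar>h\<bar> \<le> (\<Sum>i\<in>A. cmod (f i (t + h) - f i t)) / \<bar>h\<bar>"
      by (intro divide_right_mono lip) simp
    then show "\<bar>g (t + h) - g t\<bar> / \<bar>h\<bar> \<le> (\<Sum>i\<in>A. cmod (f i (t + h) - f i t) / \<bar>h\<bar>)"
      by (simp add: sum_divide_distrib)
  qed
qed

lemma spike_helper:
  fixes h :: "real \<Rightarrow> 'b::euclidean_space"
  assumes M: "negligible M" and h: "h integrable_on {a..b}"
  shows "h integrable_on ({a..b} - M)" "integral ({a..b} - M) h = integral {a..b} h"
proof -
  have n1: "negligible {x \<in> {a..b} - ({a..b} - M). h x \<noteq> 0}" by (rule negligible_subset[OF M]) auto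
  have "{x \<in> ({a..b} - M) - {a..b}. h x \<noteq> 0} = {}" by auto
  then have n2: "negligible {x \<in> ({a..b} - M) - {a..b}. h x \<noteq> 0}" by (metis negligible_empty)
  show "h integrable_on ({a..b} - M)" by (rule integrable_spike_set[OF h n1 n2])
  show "integral ({a..b} - M) h = integral {a..b} h" by (rule integral_spike_set[OF n2 n1])
qed

theorem lemma2p6:
  fixes N :: "complex ^ 'n \<Rightarrow> real"
    and f :: "'n \<Rightarrow> real \<Rightarrow> complex"
  assumes norm_zero: "\<And>x. N x = 0 \<longleftrightarrow> x = 0"
    and norm_hom: "\<And>c x. N (c *s x) = cmod c * N x"
    and norm_tri: "\<And>x y. N (x + y) \<le> N x + N y"
    and norm_diff: "\<And>x. x \<noteq> 0 \<Longrightarrow> N differentiable (at x)"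
    and norm_l1: "\<And>x. N x \<le> (\<Sum>i\<in>UNIV. cmod (x $ i))"
    and norm_abs: "\<And>x. N x = N (\<chi> i. complex_of_real (cmod (x $ i)))"
    and ac: "\<And>i. abs_cont_T (f i)"
    and nonzero: "\<And>i. ET (\<lambda>t. cmod (f i t)) > 0"
  shows "Ber (\<lambda>t. N (\<chi> i. f i t))
           \<le> dual_norm N (\<chi> i. complex_of_real (Ber (f i)))"
proof -
  interpret absnorm N using norm_zero norm_hom norm_tri norm_l1 norm_abs by unfold_locales auto
  have pp: "(0::real) < 2 * pi" by simp
  define g where "g t = N (\<chi> i. f i t)" for t
  have gfold: "(\<lambda>t. N (\<chi> i. f i t)) = g" by (simp add: g_def fun_eq_iff)
  have acf: "\<And>i. abs_cont_on 0 (2 * pi) (f i)" using ac by (simp add: abs_cont_T_def)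
  have acg: "abs_cont_on 0 (2 * pi) g" unfolding g_def by (rule ac_N_comp[OF acf])
  obtain Ng where Ng: "negligible Ng"
      "\<And>x. x \<in> {0..2 * pi} - Ng \<Longrightarrow> (g has_real_derivative vector_derivative g (at x)) (at x)"
      "(\<lambda>x. vector_derivative g (at x)) absolutely_integrable_on {0..2 * pi}"
    using ac_real_ae[OF acg pp] by blast
  have "\<forall>i. \<exists>M. negligible M \<and> (\<forall>x\<in>{0..2 * pi} - M. (f i has_vector_derivative vector_derivative (f i) (at x)) (at x)) \<and>
          (\<lambda>x. vector_derivative (f i) (at x)) absolutely_integrable_on {0..2 * pi}"
    using ac_complex_ae[OF acf pp] by blast
  then obtain Nf where Nf: "\<And>i. negligible (Nf i)"
      "\<And>i x. x \<in> {0..2 * pi} - Nf i \<Longrightarrow> (f i has_vector_derivative vector_derivative (f i) (at x)) (at x)"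
      "\<And>i. (\<lambda>x. vector_derivative (f i) (at x)) absolutely_integrable_on {0..2 * pi}"
    by metis
  define M where "M = Ng \<union> \<Union>(range Nf)"
  have negM: "negligible M" unfolding M_def using Ng(1) Nf(1)
    by (intro negligible_Un negligible_countable_Union) auto
  define S where "S = {0..2 * pi} - M"
  define dg where "dg t = \<bar>vector_derivative g (at t)\<bar>" for t
  define df where "df i t = cmod (vector_derivative (f i) (at t))" for i t
  have pw: "dg t \<le> (\<Sum>i\<in>UNIV. df i t)" if "t \<in> S" for t
    unfolding dg_def df_def
  proof (rule deriv_bound[where A = UNIV and g = g and f = f])
    show "(g has_real_derivative vector_derivative g (at t)) (at t)" using that Ng(2) by (auto simp: S_def M_def)
    show "(f i has_vector_derivative vector_derivative (f i) (at t)) (at t)" if "i \<in> UNIV" for i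
      using \<open>t \<in> S\<close> Nf(2) by (auto simp: S_def M_def)
    show "\<bar>g s - g t\<bar> \<le> (\<Sum>i\<in>UNIV. cmod (f i s - f i t))" for s
      unfolding g_def using N_abs_diff[of "\<chi> i. f i s" "\<chi> i. f i t"] by simp
  qed simp
  have idg: "dg integrable_on {0..2 * pi}"
    using Ng(3) unfolding absolutely_integrable_on_def dg_def by simp
  have idf: "df i integrable_on {0..2 * pi}" for i
    using Nf(3)[of i] unfolding absolutely_integrable_on_def df_def by simp
  have Ile: "integral {0..2 * pi} dg \<le> (\<Sum>i\<in>UNIV. integral {0..2 * pi} (df i))"
  proof -
    have "integral {0..2 * pi} dg = integral S dg" unfolding S_def using spike_helper(2)[OF negM idg] by simp
    also have "\<dots> \<le> integral S (\<lambda>t. \<Sum>i\<in>UNIV. df i t)"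
      using spike_helper(1)[OF negM idg] spike_helper(1)[OF negM idf] pw unfolding S_def
      by (intro integral_le integrable_sum) auto
    also have "\<dots> = (\<Sum>i\<in>UNIV. integral S (df i))"
      using spike_helper(1)[OF negM idf] unfolding S_def by (intro integral_sum) auto
    also have "\<dots> = (\<Sum>i\<in>UNIV. integral {0..2 * pi} (df i))"
      using spike_helper(2)[OF negM idf] unfolding S_def by simp
    finally show ?thesis .
  qed
  define A where "A i = integral {0..2 * pi} (\<lambda>t. cmod (f i t))" for i
  define v where "v t = (\<chi> i. complex_of_real (cmod (f i t)))" for t
  have cf: "continuous_on {0..2 * pi} (f i)" for i by (rule ac_cont[OF acf])
  have cv: "continuous_on {0..2 * pi} v" unfolding v_def by (intro continuous_on_vec_lambda continuous_intros cf)
  have iv: "v integrable_on {0..2 * pi}" by (rule integrable_continuous_real[OF cv])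
  have gv: "g t = N (v t)" for t unfolding g_def v_def using norm_abs[of "\<chi> i. f i t"] by simp
  have cg: "continuous_on {0..2 * pi} g" by (rule ac_cont[OF acg])
  have ig: "g integrable_on {0..2 * pi}" by (rule integrable_continuous_real[OF cg])
  have gv': "g = (\<lambda>t. N (v t))" using gv by (simp add: fun_eq_iff)
  have ig': "(\<lambda>t. N (v t)) integrable_on {0..2 * pi}" using ig unfolding gv' .
  have intv: "integral {0..2 * pi} v = (\<chi> i. complex_of_real (A i))"
    unfolding vec_eq_iff
  proof
    fix i
    have icm: "(\<lambda>t. cmod (f i t)) integrable_on {0..2 * pi}"
      by (intro integrable_continuous_real continuous_intros cf)
    have "integral {0..2 * pi} v $ i = integral {0..2 * pi} ((\<lambda>x. x $ i) \<circ> v)"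
      by (rule integral_linear[OF iv bounded_linear_vec_nth, symmetric])
    also have "\<dots> = integral {0..2 * pi} (complex_of_real \<circ> (\<lambda>t. cmod (f i t)))"
      by (simp add: v_def o_def)
    also have "\<dots> = complex_of_real (A i)"
      unfolding A_def by (rule integral_linear[OF icm bounded_linear_of_real])
    finally show "integral {0..2 * pi} v $ i = (\<chi> i. complex_of_real (A i)) $ i" by simp
  qed
  define a where "a = (\<chi> i. complex_of_real (A i))"
  define G where "G = integral {0..2 * pi} g"
  have jen: "N a \<le> G"
    unfolding a_def G_def gv' intv[symmetric] by (rule jensen[OF iv ig'])
  have Apos: "A i > 0" for i using nonzero[of i] pp by (simp add: ET_def A_def zero_less_divide_iff)
  have a0: "a \<noteq> 0"
  proof
    assume "a = 0"
    then have "a $ undefined = 0" by simp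
    then show False using Apos[of undefined] by (simp add: a_def)
  qed
  have Na: "N a > 0" using norm_zero[of a] N_nonneg[of a] a0 by linarith
  have Gpos: "G > 0" using Na jen by linarith
  have gabs: "norm (g t) = g t" for t using N_nonneg by (simp add: g_def)
  have Bg: "Ber g = integral {0..2 * pi} dg / G"
  proof -
    have e1: "(\<lambda>t. norm (vector_derivative g (at t))) = dg" by (simp add: dg_def fun_eq_iff)
    have e2: "(\<lambda>t. norm (g t)) = g" using gabs by (simp add: fun_eq_iff)
    show ?thesis unfolding Ber_def ET_def e1 e2 G_def by simp
  qed
  have Bf: "Ber (f i) = integral {0..2 * pi} (df i) / A i" for i
    unfolding Ber_def ET_def df_def A_def by simp
  define V where "V = (\<chi> i. complex_of_real (Ber (f i)))"
  define w where "w = complex_of_real (1 / N a) *s a"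
  have Nw: "N w = 1" using Na by (simp add: w_def norm_hom norm_divide)
  have If0: "0 \<le> integral {0..2 * pi} (df i)" for i
    using idf by (intro integral_nonneg) (auto simp: df_def)
  have val: "cmod (\<Sum>i\<in>UNIV. V $ i * cnj (w $ i)) = (\<Sum>i\<in>UNIV. integral {0..2 * pi} (df i)) / N a"
  proof -
    have "V $ i * cnj (w $ i) = complex_of_real (integral {0..2 * pi} (df i) / N a)" for i
      using Apos[of i] by (simp add: V_def w_def a_def Bf)
    then have E: "(\<Sum>i\<in>UNIV. V $ i * cnj (w $ i)) = complex_of_real ((\<Sum>i\<in>UNIV. integral {0..2 * pi} (df i)) / N a)"
      by (simp add: sum_divide_distrib)
    have nn: "0 \<le> (\<Sum>i\<in>UNIV. integral {0..2 * pi} (df i)) / N a"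
      using If0 Na by (intro divide_nonneg_pos sum_nonneg) auto
    show ?thesis unfolding E norm_of_real by (rule abs_of_nonneg[OF nn])
  qed
  have bdd: "bdd_above {cmod (\<Sum>i\<in>UNIV. V $ i * cnj (u $ i)) | u. N u = 1}"
  proof (rule bdd_aboveI)
    fix y assume "y \<in> {cmod (\<Sum>i\<in>UNIV. V $ i * cnj (u $ i)) | u. N u = 1}"
    then obtain u where u: "N u = 1" "y = cmod (\<Sum>i\<in>UNIV. V $ i * cnj (u $ i))" by blast
    have "y \<le> (\<Sum>i\<in>UNIV. cmod (V $ i * cnj (u $ i)))" unfolding u(2) by (rule norm_sum)
    also have "\<dots> \<le> (\<Sum>i\<in>UNIV. cmod (V $ i) / N (axis i 1))"
    proof (rule sum_mono)
      fix i :: 'n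
      have "cmod (u $ i) * N (axis i 1) \<le> 1" using N_coord[of u i] u(1) by simp
      then have "cmod (u $ i) \<le> 1 / N (axis i 1)" using N_axis_pos[of i] by (simp add: le_divide_eq)
      then have "cmod (V $ i) * cmod (u $ i) \<le> cmod (V $ i) * (1 / N (axis i 1))"
        by (intro mult_left_mono) auto
      then show "cmod (V $ i * cnj (u $ i)) \<le> cmod (V $ i) / N (axis i 1)"
        by (simp add: norm_mult)
    qed
    finally show "y \<le> (\<Sum>i\<in>UNIV. cmod (V $ i) / N (axis i 1))" .
  qed
  have "Ber g = integral {0..2 * pi} dg / G" by (rule Bg)
  also have "\<dots> \<le> (\<Sum>i\<in>UNIV. integral {0..2 * pi} (df i)) / G"
    using Ile Gpos by (simp add: divide_right_mono)
  also have "\<dots> \<le> (\<Sum>i\<in>UNIV. integral {0..2 * pi} (df i)) / N a"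
    using Na jen If0 by (intro divide_left_mono sum_nonneg) auto
  also have "\<dots> = cmod (\<Sum>i\<in>UNIV. V $ i * cnj (w $ i))" by (rule val[symmetric])
  also have "\<dots> \<le> dual_norm N V"
    unfolding dual_norm_def using bdd Nw by (intro cSup_upper) auto
  finally show ?thesis by (simp add: gfold V_def)
qed


end
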